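(* Let $A$ be a separable unital C*-algebra and let $\alpha\colon\mathbb{T}\to\mathrm{Aut}(A)$ be a continuous action of the circle group. Then $\alpha$ has the Rokhlin property if and only if for every finite subset $F\subseteq A$ and every $\varepsilon>0$ there is a unitary $u\in A$ such that $\|\alpha_\zeta(u)-\zeta u\|<\varepsilon$ for all $\zeta\in\mathbb T$ and $\|au-ua\|<\varepsilon$ for all $a\in F$.
   Context: For a unital C*-algebra $A$ with continuous action $\alpha$ of a second-countable compact group $G$: $A_\infty=\ell^\infty(\mathbb N,A)/c_0(\mathbb N,A)$ (quotient map $\kappa_A$, $A$ embedded as constant sequences, $A_\infty\cap A'$ the relative commutant); $\alpha^\infty$ is the coordinatewise action on $\ell^\infty(\mathbb N,A)$, $\ell^\infty_\alpha(\mathbb N,A)$ the set of sequences $a$ with $g\mapsto\alpha^\infty_g(a)$ norm continuous, $A_{\infty,\alpha}=\kappa_A(\ell^\infty_\alpha(\mathbb N,A))$ with induced action $\alpha_\infty$. $\mathtt{Lt}$ is left translation on $C(G)$. $\alpha$ has the Rokhlin property if there is a unital homomorphism $\varphi\colon C(G)\to A_{\infty,\alpha}\cap A'$ with $\varphi\circ\mathtt{Lt}_g=(\alpha_\infty)_g\circ\varphi$ for all $g\in G$. *)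

theory Defs
  imports "HOL-Analysis.Analysis"
begin

text \<open>A unital C*-algebra is modelled on a type of class real_normed_algebra_1 and banach
  (complete normed real algebra with unit of norm 1), together with a complex scalar
  multiplication sc extending the real one and an involution st satisfying the C*-identity.\<close>

definition cstar_alg :: "(complex \<Rightarrow> 'a::{real_normed_algebra_1,banach} \<Rightarrow> 'a) \<Rightarrow> ('a \<Rightarrow> 'a) \<Rightarrow> bool" where
  "cstar_alg sc st \<longleftrightarrow>
     (\<forall>x. sc 1 x = x) \<and> (\<forall>c d x. sc (c * d) x = sc c (sc d x)) \<and>
     (\<forall>c x y. sc c (x + y) = sc c x + sc c y) \<and> (\<forall>c d x. sc (c + d) x = sc c x + sc d x) \<and>
     (\<forall>r x. sc (complex_of_real r) x = scaleR r x) \<and>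
     (\<forall>c x y. sc c (x * y) = sc c x * y \<and> sc c (x * y) = x * sc c y) \<and>
     (\<forall>c x. norm (sc c x) = cmod c * norm x) \<and>
     (\<forall>x. st (st x) = x) \<and> (\<forall>x y. st (x + y) = st x + st y) \<and>
     (\<forall>c x. st (sc c x) = sc (cnj c) (st x)) \<and> (\<forall>x y. st (x * y) = st y * st x) \<and>
     (\<forall>x. norm (st x * x) = (norm x)^2)"

definition separable_space :: "'a::metric_space itself \<Rightarrow> bool" where
  "separable_space _ \<longleftrightarrow> (\<exists>D::'a set. countable D \<and> closure D = UNIV)"

definition star_aut :: "(complex \<Rightarrow> 'a::{real_normed_algebra_1,banach} \<Rightarrow> 'a) \<Rightarrow> ('a \<Rightarrow> 'a) \<Rightarrow> ('a \<Rightarrow> 'a) \<Rightarrow> bool" where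
  "star_aut sc st f \<longleftrightarrow> bij f \<and> (\<forall>x y. f (x + y) = f x + f y) \<and> (\<forall>c x. f (sc c x) = sc c (f x)) \<and>
     (\<forall>x y. f (x * y) = f x * f y) \<and> f 1 = 1 \<and> (\<forall>x. f (st x) = st (f x))"

text \<open>Continuous action of the circle group T = sphere 0 1 (complex numbers of modulus 1).
  Only the values of alpha on the circle are relevant.\<close>
definition circle_action :: "(complex \<Rightarrow> 'a::{real_normed_algebra_1,banach} \<Rightarrow> 'a) \<Rightarrow> ('a \<Rightarrow> 'a) \<Rightarrow> (complex \<Rightarrow> 'a \<Rightarrow> 'a) \<Rightarrow> bool" where
  "circle_action sc st \<alpha> \<longleftrightarrow>
     (\<forall>\<zeta>\<in>sphere 0 1. star_aut sc st (\<alpha> \<zeta>)) \<and> \<alpha> 1 = id \<and>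
     (\<forall>\<zeta>\<in>sphere 0 1. \<forall>\<eta>\<in>sphere 0 1. \<alpha> (\<zeta> * \<eta>) = \<alpha> \<zeta> \<circ> \<alpha> \<eta>) \<and>
     (\<forall>a. continuous_on (sphere 0 1) (\<lambda>\<zeta>. \<alpha> \<zeta> a))"

definition bounded_seq :: "(nat \<Rightarrow> 'a::real_normed_vector) \<Rightarrow> bool" where
  "bounded_seq x \<longleftrightarrow> (\<exists>B. \<forall>n. norm (x n) \<le> B)"

definition null_seq :: "(nat \<Rightarrow> 'a::real_normed_vector) \<Rightarrow> bool" where
  "null_seq x \<longleftrightarrow> x \<longlonglongrightarrow> 0"

text \<open>x lies in l^infty_alpha: zeta \<mapsto> alpha^infty_zeta(x) is continuous for the sup norm.\<close>
definition alpha_cont_seq :: "(complex \<Rightarrow> 'a::real_normed_vector \<Rightarrow> 'a) \<Rightarrow> (nat \<Rightarrow> 'a) \<Rightarrow> bool" where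
  "alpha_cont_seq \<alpha> x \<longleftrightarrow>
     (\<forall>\<zeta>0\<in>sphere 0 1. \<forall>e>0. \<exists>d>0. \<forall>\<zeta>\<in>sphere 0 1. cmod (\<zeta> - \<zeta>0) < d \<longrightarrow>
        (\<forall>n. norm (\<alpha> \<zeta> (x n) - \<alpha> \<zeta>0 (x n)) \<le> e))"

text \<open>Rokhlin property for a circle action, unfolded: a unital *-homomorphism
  phi : C(T) \<rightarrow> A_{\<infinity>,\<alpha>} \<inter> A' with phi \<circ> Lt_\<zeta> = (\<alpha>_\<infinity>)_\<zeta> \<circ> phi is given through a choice of
  representatives Phi f \<in> l^\<infinity>_\<alpha>(N,A) of phi(f) (so phi f = \<kappa>_A(Phi f)); all identities in
  A_\<infinity> become "difference is a null sequence". C(T) consists of the functions continuous on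
  the circle, identified when they agree on the circle. Lt_\<zeta> f (z) = f(\<zeta>^{-1} z).\<close>
definition rokhlin_circle :: "(complex \<Rightarrow> 'a::{real_normed_algebra_1,banach} \<Rightarrow> 'a) \<Rightarrow> ('a \<Rightarrow> 'a) \<Rightarrow> (complex \<Rightarrow> 'a \<Rightarrow> 'a) \<Rightarrow> bool" where
  "rokhlin_circle sc st \<alpha> \<longleftrightarrow>
    (\<exists>\<Phi> :: (complex \<Rightarrow> complex) \<Rightarrow> nat \<Rightarrow> 'a.
      let CT = {f. continuous_on (sphere 0 1) f} in
      (\<forall>f\<in>CT. bounded_seq (\<Phi> f) \<and> alpha_cont_seq \<alpha> (\<Phi> f)) \<and>
      (\<forall>f\<in>CT. \<forall>g\<in>CT. (\<forall>z\<in>sphere 0 1. f z = g z) \<longrightarrow> null_seq (\<lambda>n. \<Phi> f n - \<Phi> g n)) \<and>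
      (\<forall>f\<in>CT. \<forall>g\<in>CT. null_seq (\<lambda>n. \<Phi> (\<lambda>z. f z + g z) n - \<Phi> f n - \<Phi> g n)) \<and>
      (\<forall>f\<in>CT. \<forall>c. null_seq (\<lambda>n. \<Phi> (\<lambda>z. c * f z) n - sc c (\<Phi> f n))) \<and>
      (\<forall>f\<in>CT. \<forall>g\<in>CT. null_seq (\<lambda>n. \<Phi> (\<lambda>z. f z * g z) n - \<Phi> f n * \<Phi> g n)) \<and>
      (\<forall>f\<in>CT. null_seq (\<lambda>n. \<Phi> (\<lambda>z. cnj (f z)) n - st (\<Phi> f n))) \<and>
      null_seq (\<lambda>n. \<Phi> (\<lambda>z. 1) n - 1) \<and>
      (\<forall>f\<in>CT. \<forall>a. null_seq (\<lambda>n. \<Phi> f n * a - a * \<Phi> f n)) \<and>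
      (\<forall>f\<in>CT. \<forall>\<zeta>\<in>sphere 0 1. null_seq (\<lambda>n. \<alpha> \<zeta> (\<Phi> f n) - \<Phi> (\<lambda>z. f (cnj \<zeta> * z)) n)))"

definition unitary_el :: "('a::ring_1 \<Rightarrow> 'a) \<Rightarrow> 'a \<Rightarrow> bool" where
  "unitary_el st u \<longleftrightarrow> st u * u = 1 \<and> u * st u = 1"

end

theory Submission
  imports Defs "HOL-Complex_Analysis.Complex_Analysis" "HOL-Computational_Algebra.Formal_Power_Series"
begin


locale cstar =
  fixes sc :: "complex \<Rightarrow> 'a::{real_normed_algebra_1,banach} \<Rightarrow> 'a"
    and st :: "'a \<Rightarrow> 'a"
  assumes cs: "cstar_alg sc st"
begin

lemma sc_one[simp]: "sc 1 x = x" using cs by (simp add: cstar_alg_def)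
lemma sc_sc[simp]: "sc c (sc d x) = sc (c * d) x" using cs by (simp add: cstar_alg_def)
lemma sc_add: "sc c (x + y) = sc c x + sc c y" using cs by (simp add: cstar_alg_def)
lemma sc_add_left: "sc (c + d) x = sc c x + sc d x" using cs by (simp add: cstar_alg_def)
lemma sc_real: "sc (complex_of_real r) x = scaleR r x" using cs by (simp add: cstar_alg_def)
lemma sc_mult_left: "sc c x * y = sc c (x * y)" using cs by (simp add: cstar_alg_def)
lemma sc_mult_right: "x * sc c y = sc c (x * y)" using cs unfolding cstar_alg_def by metis
lemma norm_sc: "norm (sc c x) = cmod c * norm x" using cs by (simp add: cstar_alg_def)
lemma st_st[simp]: "st (st x) = x" using cs by (simp add: cstar_alg_def)
lemma st_add: "st (x + y) = st x + st y" using cs by (simp add: cstar_alg_def)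
lemma st_sc: "st (sc c x) = sc (cnj c) (st x)" using cs by (simp add: cstar_alg_def)
lemma st_mult: "st (x * y) = st y * st x" using cs by (simp add: cstar_alg_def)
lemma cstar_id: "norm (st x * x) = (norm x)^2" using cs by (simp add: cstar_alg_def)

lemma sc_zero_left[simp]: "sc 0 x = 0"
  using sc_real[of 0 x] by simp
lemma sc_zero_right[simp]: "sc c 0 = 0"
  using sc_add[of c 0 0] by (metis add_cancel_right_right)
lemma sc_minus_right: "sc c (- x) = - sc c x"
  using sc_add[of c x "-x"] by (simp add: add_eq_0_iff)
lemma sc_diff: "sc c (x - y) = sc c x - sc c y"
  by (metis diff_conv_add_uminus sc_add sc_minus_right)
lemma sc_minus_left: "sc (- c) x = - sc c x"
  using sc_add_left[of c "-c" x] by (simp add: add_eq_0_iff)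
lemma sc_of_real_1: "sc (complex_of_real r) 1 = of_real r"
  by (simp add: sc_real scaleR_conv_of_real)
lemma sc_sum: "sc c (sum f A) = (\<Sum>i\<in>A. sc c (f i))"
  by (induction A rule: infinite_finite_induct) (auto simp: sc_add)
lemma sc_sum_left: "sc (sum f A) x = (\<Sum>i\<in>A. sc (f i) x)"
  by (induction A rule: infinite_finite_induct) (auto simp: sc_add_left)

lemma st_0[simp]: "st 0 = 0"
  using st_add[of 0 0] by (metis add_cancel_right_right)
lemma st_minus: "st (- x) = - st x"
  using st_add[of x "-x"] by (simp add: add_eq_0_iff)
lemma st_diff: "st (x - y) = st x - st y"
  by (metis diff_conv_add_uminus st_add st_minus)
lemma st_1[simp]: "st 1 = 1"
proof -
  have "st 1 = st 1 * st (st 1)" by simp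
  also have "\<dots> = st (st 1 * 1)" by (simp only: st_mult)
  finally show ?thesis by simp
qed
lemma st_scaleR: "st (scaleR r x) = scaleR r (st x)"
  using st_sc[of "complex_of_real r" x] by (simp add: sc_real)
lemma st_sum: "st (sum f A) = (\<Sum>i\<in>A. st (f i))"
  by (induction A rule: infinite_finite_induct) (auto simp: st_add)
lemma st_power: "st (x ^ n) = (st x) ^ n"
proof (induction n)
  case (Suc n)
  have "st (x ^ Suc n) = st (x ^ n) * st x" by (simp add: st_mult)
  also have "\<dots> = st x ^ Suc n" using Suc by (simp add: power_commutes)
  finally show ?case .
qed simp

lemma norm_st_le: "norm x \<le> norm (st x)"
proof (cases "x = 0")
  case False
  have "(norm x)^2 \<le> norm (st x) * norm x"
    using cstar_id[of x] norm_mult_ineq[of "st x" x] by simp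
  then show ?thesis using False by (simp add: power2_eq_square)
qed simp
lemma norm_st[simp]: "norm (st x) = norm x"
  using norm_st_le[of x] norm_st_le[of "st x"] by simp

lemma bounded_linear_st: "bounded_linear st"
  by (rule bounded_linear_intro[where K=1]) (auto simp: st_add st_scaleR)

lemma st_suminf: "summable f \<Longrightarrow> st (suminf f) = (\<Sum>n. st (f n))"
  using bounded_linear.suminf[OF bounded_linear_st] by (simp add: o_def)

lemma self_adj_norm_sq: "st h = h \<Longrightarrow> norm (h * h) = (norm h)^2"
  using cstar_id[of h] by simp

definition unitary :: "'a \<Rightarrow> bool" where
  "unitary u \<longleftrightarrow> st u * u = 1 \<and> u * st u = 1"

lemma unitary_norm: "unitary u \<Longrightarrow> norm u = 1"
  using cstar_id[of u] unfolding unitary_def using norm_ge_zero[of u] by (simp add: power2_eq_1_iff)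

lemma unitary_st: "unitary u \<Longrightarrow> unitary (st u)"
  by (simp add: unitary_def)

lemma unitary_commute: "unitary u \<Longrightarrow> st u * u = u * st u"
  by (simp add: unitary_def)

end


definition cc :: "nat \<Rightarrow> real" where
  "cc k = pochhammer (1/2) k / fact k"

lemma cc_gchoose: "cc k = (-1)^k * ((-1/2) gchoose k)"
  by (simp add: cc_def gbinomial_pochhammer)

lemma cc_nonneg: "cc k \<ge> 0"
  unfolding cc_def by (intro divide_nonneg_pos pochhammer_nonneg) auto

lemma cc_0[simp]: "cc 0 = 1" by (simp add: cc_def)

lemma cc_conv: "(\<Sum>i\<le>k. cc i * cc (k - i)) = 1"
proof -
  have "(\<Sum>i\<le>k. cc i * cc (k - i)) = (\<Sum>i\<le>k. (-1)^k * (((-1/2::real) gchoose i) * ((-1/2) gchoose (k - i))))"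
  proof (rule sum.cong)
    fix i assume "i \<in> {..k}"
    then have "(-1::real)^i * (-1)^(k-i) = (-1)^k"
      by (metis le_add_diff_inverse atMost_iff power_add)
    then show "cc i * cc (k - i) = (-1)^k * (((-1/2::real) gchoose i) * ((-1/2) gchoose (k - i)))"
      unfolding cc_gchoose by (metis (no_types, lifting) mult.assoc mult.left_commute)
  qed simp
  also have "\<dots> = (-1)^k * (\<Sum>i\<le>k. ((-1/2::real) gchoose i) * ((-1/2) gchoose (k - i)))"
    by (simp add: sum_distrib_left)
  also have "(\<Sum>i\<le>k. ((-1/2::real) gchoose i) * ((-1/2) gchoose (k - i))) = ((-1::real) gchoose k)"
    using gbinomial_Vandermonde[of "-1/2::real" "-1/2" k] by (simp add: atLeast0AtMost)
  also have "((-1::real) gchoose k) = (-1)^k"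
    using gbinomial_minus[of "1::real" k] by (simp add: binomial_gbinomial[symmetric])
  finally show ?thesis by (simp flip: power_add add: power_even_eq[symmetric] mult_2[symmetric])
qed

lemma cc_le1: "cc k \<le> 1"
proof (cases k)
  case (Suc m)
  have "cc 0 * cc k + cc k * cc 0 \<le> (\<Sum>i\<le>k. cc i * cc (k - i))"
  proof -
    have sub: "{0, k} \<subseteq> {..k}" by auto
    have "(\<Sum>i\<in>{0,k}. cc i * cc (k - i)) \<le> (\<Sum>i\<le>k. cc i * cc (k - i))"
      by (rule sum_mono2[OF _ sub]) (auto intro: mult_nonneg_nonneg cc_nonneg)
    then show ?thesis using Suc by simp
  qed
  then show ?thesis using cc_conv[of k] cc_nonneg[of k] by simp
qed simp

context cstar
begin

lemma commute_power: "(z::'a) * y = y * z \<Longrightarrow> z * y ^ k = y ^ k * z"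
proof (induction k)
  case (Suc k)
  assume zy: "z * y = y * z"
  have "z * y ^ Suc k = (z * y) * y ^ k" by (simp add: mult.assoc)
  also have "\<dots> = y * (z * y ^ k)" using zy by (simp add: mult.assoc)
  also have "\<dots> = y ^ Suc k * z" using Suc zy by (simp add: mult.assoc)
  finally show ?case .
qed simp

lemma invsqrt:
  assumes ny: "norm y < 1" and sy: "st y = y"
  shows "\<exists>p. st p = p \<and> (\<forall>z. z * y = y * z \<longrightarrow> z * p = p * z) \<and> p * p * (1 - y) = 1 \<and>
             norm (p - 1) \<le> norm y / (1 - norm y)"
proof -
  define a where "a k = cc k *\<^sub>R y ^ k" for k
  have na: "norm (a k) \<le> norm y ^ k" for k
  proof -
    have "norm (a k) = cc k * norm (y ^ k)" using cc_nonneg[of k] by (simp add: a_def)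
    also have "\<dots> \<le> 1 * norm y ^ k"
      by (intro mult_mono cc_le1 norm_power_ineq) auto
    finally show ?thesis by simp
  qed
  have sg: "summable (\<lambda>k. norm y ^ k)" using ny by (simp add: summable_geometric)
  have sna: "summable (\<lambda>k. norm (a k))"
    by (rule summable_comparison_test[OF _ sg]) (use na in auto)
  have sa: "summable a" using sna by (rule summable_norm_cancel)
  define p where "p = suminf a"
  have sgy: "summable (\<lambda>k. y ^ k)"
    by (rule summable_comparison_test[OF _ sg]) (auto intro: norm_power_ineq)
  have "p * p = (\<Sum>k. \<Sum>i\<le>k. a i * a (k - i))"
    unfolding p_def by (rule Cauchy_product[OF sna sna])
  also have "(\<lambda>k. \<Sum>i\<le>k. a i * a (k - i)) = (\<lambda>k. y ^ k)"
  proof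
    fix k
    have "(\<Sum>i\<le>k. a i * a (k - i)) = (\<Sum>i\<le>k. (cc i * cc (k - i)) *\<^sub>R y ^ k)"
    proof (rule sum.cong)
      fix i assume "i \<in> {..k}"
      then have "y ^ i * y ^ (k - i) = y ^ k" by (simp flip: power_add)
      then show "a i * a (k - i) = (cc i * cc (k - i)) *\<^sub>R y ^ k"
        by (simp add: a_def)
    qed simp
    also have "\<dots> = (\<Sum>i\<le>k. cc i * cc (k - i)) *\<^sub>R y ^ k"
      by (simp add: scaleR_sum_left)
    finally show "(\<Sum>i\<le>k. a i * a (k - i)) = y ^ k" by (simp add: cc_conv)
  qed
  finally have pp: "p * p = (\<Sum>k. y ^ k)" .
  have geo: "(\<Sum>k. y ^ k) * (1 - y) = 1"
  proof -
    have "(\<lambda>n. (\<Sum>k<n. y ^ k) * (1 - y)) = (\<lambda>n. 1 - y ^ n)"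
    proof
      fix n show "(\<Sum>k<n. y ^ k) * (1 - y) = 1 - y ^ n"
      proof (induction n)
        case (Suc n)
        have "(\<Sum>k<Suc n. y ^ k) * (1 - y) = (\<Sum>k<n. y ^ k) * (1 - y) + y ^ n * (1 - y)"
          by (simp add: distrib_right)
        also have "\<dots> = 1 - y ^ n + (y ^ n - y ^ Suc n)"
          using Suc.IH by (simp add: right_diff_distrib power_Suc2 power_commutes)
        finally show ?case by simp
      qed simp
    qed
    moreover have "(\<lambda>n. 1 - y ^ n) \<longlonglongrightarrow> 1 - 0"
      by (intro tendsto_intros LIMSEQ_power_zero ny)
    ultimately have "(\<lambda>n. (\<Sum>k<n. y ^ k) * (1 - y)) \<longlonglongrightarrow> 1" by simp
    moreover have "(\<lambda>n. (\<Sum>k<n. y ^ k) * (1 - y)) \<longlonglongrightarrow> (\<Sum>k. y ^ k) * (1 - y)"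
      by (intro tendsto_intros summable_LIMSEQ sgy)
    ultimately show ?thesis using LIMSEQ_unique by blast
  qed
  have comm: "z * p = p * z" if zy: "z * y = y * z" for z
  proof -
    have "z * p = (\<Sum>k. z * a k)" unfolding p_def by (rule suminf_mult[OF sa, symmetric])
    also have "\<dots> = (\<Sum>k. a k * z)"
      by (simp add: a_def commute_power[OF zy])
    also have "\<dots> = p * z" unfolding p_def by (rule suminf_mult2[OF sa, symmetric])
    finally show ?thesis .
  qed
  have stp: "st p = p"
  proof -
    have "st p = (\<Sum>k. st (a k))" unfolding p_def by (rule st_suminf[OF sa])
    also have "(\<lambda>k. st (a k)) = a" by (rule ext) (simp add: a_def st_scaleR st_power sy)
    finally show ?thesis by (simp add: p_def)
  qed
  have "norm (p - 1) \<le> norm y / (1 - norm y)"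
  proof -
    have sa': "summable (\<lambda>k. a (Suc k))" using sa by (simp add: summable_Suc_iff)
    have "p - 1 = (\<Sum>k. a (Suc k))" unfolding p_def
      using suminf_split_head[OF sa] by (simp add: a_def)
    also have "norm \<dots> \<le> (\<Sum>k. norm (a (Suc k)))"
      by (rule summable_norm) (subst summable_Suc_iff, rule sna)
    also have "\<dots> \<le> (\<Sum>k. norm y * norm y ^ k)"
    proof (rule suminf_le)
      show "summable (\<lambda>k. norm (a (Suc k)))" by (subst summable_Suc_iff, rule sna)
      show "summable (\<lambda>k. norm y * norm y ^ k)" using sg by (rule summable_mult)
      show "\<And>k. norm (a (Suc k)) \<le> norm y * norm y ^ k" using na by (metis power_Suc)
    qed
    also have "\<dots> = norm y / (1 - norm y)"
      using suminf_mult[OF sg, of "norm y"] suminf_geometric[of "norm y"] ny by simp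
    finally show ?thesis .
  qed
  moreover have "p * p * (1 - y) = 1" using pp geo by simp
  ultimately show ?thesis using stp comm by blast
qed

end


context cstar
begin

lemma sc_neg1[simp]: "sc (-1) x = - x"
  using sc_minus_left[of 1 x] by simp

lemma st_self_adj_1y: "st y = y \<Longrightarrow> st (1 - y) = 1 - y"
  by (simp add: st_diff)

lemma approx_unitary:
  assumes h1: "norm (1 - st x * x) < 1/2" and h2: "norm (1 - x * st x) < 1"
  shows "\<exists>u. unitary u \<and> norm (u - x) \<le> 2 * norm x * norm (1 - st x * x)"
proof -
  define y where "y = 1 - st x * x"
  have sy: "st y = y" by (simp add: y_def st_diff st_mult)
  have ny: "norm y < 1" using h1 by (simp add: y_def)
  obtain p where sp: "st p = p" and cp: "\<And>z. z * y = y * z \<Longrightarrow> z * p = p * z"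
    and pp: "p * p * (1 - y) = 1" and np: "norm (p - 1) \<le> norm y / (1 - norm y)"
    using invsqrt[OF ny sy] by blast
  define y' where "y' = 1 - x * st x"
  have sy': "st y' = y'" by (simp add: y'_def st_diff st_mult)
  have ny': "norm y' < 1" using h2 by (simp add: y'_def)
  obtain q where cq: "\<And>z. z * y' = y' * z \<Longrightarrow> z * q = q * z"
    and qq: "q * q * (1 - y') = 1"
    using invsqrt[OF ny' sy'] by blast
  have xx: "st x * x = 1 - y" by (simp add: y_def)
  have xx': "x * st x = 1 - y'" by (simp add: y'_def)
  have py: "y * p = p * y" using cp[of y] by simp
  have qy: "y' * q = q * y'" using cq[of y'] by simp
  define L where "L = p * p * st x"
  define R where "R = st x * (q * q)"
  have Lx: "L * x = 1" unfolding L_def using pp xx by (simp add: mult.assoc)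
  have xR: "x * R = 1"
  proof -
    have "x * R = (1 - y') * (q * q)" unfolding R_def using xx' by (simp add: mult.assoc[symmetric])
    also have "\<dots> = q * q * (1 - y')"
    proof -
      have c1: "(1 - y') * q = q * (1 - y')" using qy by (simp add: algebra_simps)
      have "(1 - y') * (q * q) = ((1 - y') * q) * q" by (simp add: mult.assoc)
      also have "\<dots> = q * ((1 - y') * q)" by (simp only: c1 mult.assoc)
      also have "\<dots> = q * q * (1 - y')" by (simp only: c1 mult.assoc)
      finally show ?thesis .
    qed
    finally show ?thesis using qq by simp
  qed
  have LR: "L = R"
  proof -
    have "L = L * (x * R)" using xR by simp
    also have "\<dots> = (L * x) * R" by (simp add: mult.assoc)
    finally show ?thesis using Lx by simp
  qed
  define u where "u = x * p"
  have "st u * u = 1"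
  proof -
    have "st u * u = p * (st x * x) * p" by (simp add: u_def st_mult sp mult.assoc)
    also have "\<dots> = p * ((1 - y) * p)" using xx by (simp add: mult.assoc)
    also have "(1 - y) * p = p * (1 - y)" using py by (simp add: algebra_simps)
    finally show ?thesis using pp by (simp add: mult.assoc)
  qed
  moreover have "u * st u = 1"
  proof -
    have "u * st u = x * L" by (simp add: u_def L_def st_mult sp mult.assoc)
    then show ?thesis using LR xR by simp
  qed
  moreover have "norm (u - x) \<le> 2 * norm x * norm y"
  proof -
    have "u - x = x * (p - 1)" by (simp add: u_def algebra_simps)
    then have "norm (u - x) \<le> norm x * norm (p - 1)" by (simp add: norm_mult_ineq)
    also have "\<dots> \<le> norm x * (norm y / (1 - norm y))"
      by (intro mult_left_mono np) simp
    also have "norm y / (1 - norm y) \<le> 2 * norm y"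
    proof -
      have n1: "norm y < 1/2" using h1 by (simp add: y_def)
      have "norm y * 1 \<le> norm y * (2 * (1 - norm y))"
        by (rule mult_left_mono) (use n1 in auto)
      then show ?thesis using n1 by (simp add: pos_divide_le_eq algebra_simps)
    qed
    then have "norm x * (norm y / (1 - norm y)) \<le> norm x * (2 * norm y)"
      by (intro mult_left_mono) simp_all
    finally show ?thesis by simp
  qed
  ultimately show ?thesis unfolding unitary_def y_def by blast
qed

lemma hom_contr_1:
  assumes hadd: "\<And>x y. \<phi> (x + y) = \<phi> x + \<phi> y"
    and hsc: "\<And>c x. \<phi> (sc c x) = sc c (\<phi> x)"
    and hmul: "\<And>x y. \<phi> (x * y) = \<phi> x * \<phi> y"
    and h1: "\<phi> 1 = 1"
    and hst: "\<And>x. \<phi> (st x) = st (\<phi> x)"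
    and na: "norm a < 1"
  shows "norm (\<phi> a) \<le> 1"
proof -
  have h0: "\<phi> 0 = 0" using hadd[of 0 0] by (metis add_cancel_right_right)
  have hminus: "\<phi> (- x) = - \<phi> x" for x using hadd[of x "-x"] h0 by (simp add: add_eq_0_iff)
  have hdiff: "\<phi> (x - y) = \<phi> x - \<phi> y" for x y
    by (metis diff_conv_add_uminus hadd hminus)
  define h where "h = st a * a"
  have sh: "st h = h" by (simp add: h_def st_mult)
  have nh: "norm h < 1" using na cstar_id[of a]
    by (simp add: h_def power_less_one_iff)
  define y where "y = h * h"
  have sy: "st y = y" by (simp add: y_def st_mult sh)
  have ny: "norm y < 1"
  proof -
    have "norm y \<le> norm h * norm h" unfolding y_def by (rule norm_mult_ineq)
    also have "\<dots> < 1" using mult_left_le[of "norm h" "norm h"] nh by simp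
    finally show ?thesis .
  qed
  obtain p where sp: "st p = p" and cp: "\<And>z. z * y = y * z \<Longrightarrow> z * p = p * z"
    and pp: "p * p * (1 - y) = 1"
    using invsqrt[OF ny sy] by blast
  have py: "y * p = p * y" using cp[of y] by simp
  have ph: "h * p = p * h" using cp[of h] by (simp add: y_def mult.assoc)
  define s where "s = p * (1 - y)"
  have p1y: "(1 - y) * p = p * (1 - y)" using py by (simp add: algebra_simps)
  have ss: "st s = s" unfolding s_def using p1y by (simp add: st_mult st_diff sy sp)
  have sh_comm: "s * h = h * s"
  proof -
    have "(1 - y) * h = h * (1 - y)" by (simp add: y_def algebra_simps mult.assoc)
    then show ?thesis unfolding s_def using ph
      by (metis mult.assoc)
  qed
  have s2: "s * s = 1 - h * h"
  proof -
    have "s * s = p * ((1 - y) * p) * (1 - y)" by (simp add: s_def mult.assoc)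
    also have "\<dots> = (p * p * (1 - y)) * (1 - y)" using p1y by (simp add: mult.assoc)
    finally show ?thesis using pp by (simp add: y_def)
  qed
  define H where "H = \<phi> h"
  define S where "S = \<phi> s"
  have sH: "st H = H" unfolding H_def using sh hst by metis
  have sS: "st S = S" unfolding S_def using ss hst by metis
  have SH: "S * H = H * S" unfolding S_def H_def by (metis hmul sh_comm)
  have S2: "S * S = 1 - H * H" unfolding S_def H_def by (metis hmul s2 hdiff h1)
  define w where "w = H + sc \<i> S"
  have stw: "st w = H + sc (- \<i>) S" by (simp add: w_def st_add st_sc sH sS)
  have "st w * w = (H + sc (- \<i>) S) * (H + sc \<i> S)" unfolding stw by (simp add: w_def)
  also have "\<dots> = H * H + S * S"
    by (simp add: distrib_left distrib_right left_diff_distrib right_diff_distrib sc_diff sc_mult_left sc_mult_right SH sc_minus_left)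
  also have "\<dots> = 1" by (simp add: S2)
  finally have ww: "st w * w = 1" .
  have nw: "norm w = 1"
    using cstar_id[of w] ww norm_ge_zero[of w] by (simp add: power2_eq_1_iff) 
  have "w + st w = H + H"
    unfolding stw by (simp add: w_def sc_minus_left)
  then have "norm (H + H) \<le> 2" using norm_triangle_ineq[of w "st w"] nw by simp
  moreover have "norm (H + H) = 2 * norm H"
    using norm_scaleR[of 2 H] scaleR_2[of H] by simp
  ultimately have nH: "norm H \<le> 1" by simp
  have "(norm (\<phi> a))^2 = norm (st (\<phi> a) * \<phi> a)" by (rule cstar_id[symmetric])
  also have "\<dots> = norm H" by (simp add: H_def h_def hmul hst)
  finally have "(norm (\<phi> a))^2 \<le> 1" using nH by simp
  then show ?thesis using power_le_one_iff[of "norm (\<phi> a)" 2] by simp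
qed

lemma hom_contr:
  assumes hadd: "\<And>x y. \<phi> (x + y) = \<phi> x + \<phi> y"
    and hsc: "\<And>c x. \<phi> (sc c x) = sc c (\<phi> x)"
    and hmul: "\<And>x y. \<phi> (x * y) = \<phi> x * \<phi> y"
    and h1: "\<phi> 1 = 1"
    and hst: "\<And>x. \<phi> (st x) = st (\<phi> x)"
  shows "norm (\<phi> a) \<le> norm a"
proof (rule dense_ge)
  fix r assume r: "norm a < r"
  then have r0: "r > 0" using norm_ge_zero[of a] by linarith
  define b where "b = sc (complex_of_real (1/r)) a"
  have "norm b = norm a / r" using r0 by (simp add: b_def norm_sc norm_divide)
  then have "norm b < 1" using r r0 by simp
  then have "norm (\<phi> b) \<le> 1" by (rule hom_contr_1[where \<phi>=\<phi>, OF hadd hsc hmul h1 hst])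
  moreover have "norm (\<phi> b) = norm (\<phi> a) / r" using r0 by (simp add: b_def hsc norm_sc norm_divide)
  ultimately show "norm (\<phi> a) \<le> r" using r0 by (simp add: field_simps)
qed

end


lemma coeff_bound:
  fixes Q :: "complex poly"
  assumes hB: "\<And>z. cmod z = 1 \<Longrightarrow> cmod (poly Q z) \<le> B"
  shows "cmod (coeff Q k) \<le> B"
proof -
  have hd: "(deriv ^^ n) (poly Q) = poly ((pderiv ^^ n) Q)" for n
  proof (induction n)
    case (Suc n)
    show ?case
      by (rule ext) (simp add: Suc DERIV_imp_deriv[OF poly_DERIV])
  qed simp
  have "norm ((deriv ^^ k) (poly Q) 0) \<le> fact k * B / 1 ^ k"
  proof (rule Cauchy_inequality)
    show "poly Q holomorphic_on ball 0 1"
      using poly_holomorphic_on[of "\<lambda>z. z" "ball 0 1" Q] by (simp add: holomorphic_on_id)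
    show "continuous_on (cball 0 1) (poly Q)" by (intro continuous_intros)
    show "norm (poly Q x) \<le> B" if "norm (0 - x) = 1" for x using hB that by simp
  qed simp
  then have "norm (fact k * coeff Q k) \<le> fact k * B"
    by (simp add: hd poly_0_coeff_0 coeff_higher_pderiv pochhammer_fact[symmetric])
  then show ?thesis by (simp add: norm_mult)
qed

context cstar
begin

definition peval :: "'a \<Rightarrow> complex poly \<Rightarrow> 'a" where
  "peval w P = (\<Sum>i\<le>degree P. sc (coeff P i) (w ^ i))"

lemma peval_upto: "degree P \<le> N \<Longrightarrow> peval w P = (\<Sum>i\<le>N. sc (coeff P i) (w ^ i))"
proof -
  assume d: "degree P \<le> N"
  have "(\<Sum>i\<le>N. sc (coeff P i) (w ^ i)) = (\<Sum>i\<le>degree P. sc (coeff P i) (w ^ i))"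
  proof (rule sum.mono_neutral_right)
    show "\<forall>i\<in>{..N} - {..degree P}. sc (coeff P i) (w ^ i) = 0"
      by (auto simp: coeff_eq_0)
  qed (use d in auto)
  then show ?thesis by (simp add: peval_def)
qed

lemma peval_add: "peval w (P + Q) = peval w P + peval w Q"
proof -
  let ?N = "max (degree P) (degree Q)"
  have "peval w (P + Q) = (\<Sum>i\<le>?N. sc (coeff (P + Q) i) (w ^ i))"
    by (rule peval_upto) (simp add: degree_add_le)
  also have "\<dots> = (\<Sum>i\<le>?N. sc (coeff P i) (w ^ i)) + (\<Sum>i\<le>?N. sc (coeff Q i) (w ^ i))"
    by (simp add: sc_add_left sum.distrib)
  also have "\<dots> = peval w P + peval w Q"
    by (simp add: peval_upto[symmetric])
  finally show ?thesis .
qed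

lemma peval_0[simp]: "peval w 0 = 0" by (simp add: peval_def)

lemma peval_smult: "peval w (smult c P) = sc c (peval w P)"
proof -
  have "peval w (smult c P) = (\<Sum>i\<le>degree P. sc (coeff (smult c P) i) (w ^ i))"
    by (rule peval_upto) (rule degree_smult_le)
  also have "\<dots> = sc c (peval w P)"
    by (simp add: peval_def sc_sum)
  finally show ?thesis .
qed

lemma peval_pCons: "peval w (pCons a P) = sc a 1 + w * peval w P"
proof -
  have "peval w (pCons a P) = (\<Sum>i\<le>Suc (degree P). sc (coeff (pCons a P) i) (w ^ i))"
    by (rule peval_upto) (simp add: degree_pCons_le)
  also have "\<dots> = sc a 1 + (\<Sum>i\<le>degree P. sc (coeff P i) (w ^ Suc i))"
    by (simp only: sum.atMost_Suc_shift) simp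
  also have "(\<Sum>i\<le>degree P. sc (coeff P i) (w ^ Suc i)) = w * peval w P"
    by (simp add: peval_def sum_distrib_left sc_mult_right)
  finally show ?thesis .
qed

lemma peval_const: "peval w [:a:] = sc a 1"
  by (simp add: peval_def)

lemma peval_1[simp]: "peval w 1 = 1"
  by (simp add: peval_def)

lemma peval_mult: "peval w (P * Q) = peval w P * peval w Q"
proof (induction P rule: pCons_induct)
  case (pCons a P)
  have "peval w (pCons a P * Q) = peval w (smult a Q + pCons 0 (P * Q))" by simp
  also have "\<dots> = sc a (peval w Q) + w * (peval w P * peval w Q)"
    by (simp add: peval_add peval_smult peval_pCons pCons.IH)
  also have "\<dots> = peval w (pCons a P) * peval w Q"
    by (simp add: peval_pCons distrib_right sc_mult_left mult.assoc)
  finally show ?case .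
qed simp

lemma peval_power: "peval w (P ^ n) = (peval w P) ^ n"
  by (induction n) (simp_all add: peval_mult)

lemma peval_X: "peval w [:0, c:] = sc c w"
  by (simp add: peval_pCons peval_const sc_mult_right)

lemma peval_pcompose: "peval w (pcompose P [:0, c:]) = peval (sc c w) P"
proof (induction P rule: pCons_induct)
  case (pCons a P)
  show ?case
    by (simp add: pcompose_pCons peval_add peval_mult peval_const peval_X pCons.IH peval_pCons
        peval_smult sc_mult_left sc_mult_right)
qed simp

lemma peval_monom: "peval w (monom 1 n) = w ^ n"
proof -
  have "peval w (monom 1 n) = (\<Sum>i\<le>n. sc (coeff (monom 1 n) i) (w ^ i))"
    by (rule peval_upto) (simp add: degree_monom_le)
  also have "\<dots> = (\<Sum>i\<le>n. if i = n then w ^ i else 0)"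
    by (rule sum.cong) (auto simp: coeff_monom)
  finally show ?thesis by simp
qed

lemma norm_sc_pow: "norm w \<le> 1 \<Longrightarrow> norm (sc c (w ^ i)) \<le> cmod c"
proof -
  assume "norm w \<le> 1"
  then have "norm (w ^ i) \<le> 1"
    by (metis norm_power_ineq order_trans power_le_one norm_ge_zero)
  then show ?thesis by (simp add: norm_sc mult_left_le)
qed

lemma peval_norm_sum: "norm w \<le> 1 \<Longrightarrow> norm (peval w P) \<le> (\<Sum>i\<le>degree P. cmod (coeff P i))"
  unfolding peval_def by (rule order_trans[OF norm_sum sum_mono]) (rule norm_sc_pow)

lemma peval_norm_coeffB:
  fixes B :: real
  assumes w: "norm w \<le> 1" and hB: "\<And>z. cmod z = 1 \<Longrightarrow> cmod (poly P z) \<le> B"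
  shows "norm (peval w P) \<le> (real (degree P) + 1) * B"
proof -
  have "norm (peval w P) \<le> (\<Sum>i\<le>degree P. cmod (coeff P i))" by (rule peval_norm_sum[OF w])
  also have "\<dots> \<le> (\<Sum>i\<le>degree P. B)" by (intro sum_mono coeff_bound hB)
  finally show ?thesis by (simp add: add.commute)
qed

lemma commute_sc: "a * x = x * a \<Longrightarrow> a * sc c x = sc c x * a"
  by (simp add: sc_mult_left sc_mult_right)

lemma commute_sum: "(\<And>i. i \<in> A \<Longrightarrow> (a::'a) * f i = f i * a) \<Longrightarrow> a * sum f A = sum f A * a"
  by (induction A rule: infinite_finite_induct) (auto simp: distrib_left distrib_right)

lemma commute_peval_gen:
  "a * w = w * a \<Longrightarrow> a * (\<Sum>i\<in>A. sc (f i) (w ^ i)) = (\<Sum>i\<in>A. sc (f i) (w ^ i)) * a"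
  by (intro commute_sum commute_sc commute_power)

lemma st_peval: "st (peval w P) = (\<Sum>i\<le>degree P. sc (cnj (coeff P i)) (st w ^ i))"
  by (simp add: peval_def st_sum st_sc st_power)

lemma peval_normal:
  assumes u: "unitary w"
  shows "st (peval w P) * peval w P = peval w P * st (peval w P)"
proof -
  have c1: "st w * w = w * st w" using u by (simp add: unitary_def)
  have A: "st w * peval w P = peval w P * st w"
    unfolding peval_def by (rule commute_peval_gen[OF c1])
  have "peval w P * st (peval w P) = st (peval w P) * peval w P"
    unfolding st_peval by (rule commute_peval_gen[OF A[symmetric]])
  then show ?thesis by simp
qed

lemma normal_sq_norm:
  assumes n: "st y * y = y * st y"
  shows "norm (y * y) = (norm y)^2"
proof -
  define h where "h = st y * y"
  have sh: "st h = h" by (simp add: h_def st_mult)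
  have "st (y * y) * (y * y) = st y * (st y * y) * y" by (simp add: st_mult mult.assoc)
  also have "\<dots> = st y * (y * st y) * y" by (simp only: n)
  also have "\<dots> = h * h" by (simp only: h_def mult.assoc)
  finally have "(norm (y * y))^2 = norm (h * h)" using cstar_id[of "y * y"] by simp
  also have "\<dots> = (norm h)^2" using self_adj_norm_sq[OF sh] .
  also have "norm h = (norm y)^2" by (simp add: h_def cstar_id)
  finally have "(norm (y * y))^2 = ((norm y)^2)^2" .
  then show ?thesis by (rule power2_eq_imp_eq) simp_all
qed

lemma normal_pow2_norm:
  assumes n: "st x * x = x * st x"
  shows "norm (x ^ (2 ^ m)) = (norm x) ^ (2 ^ m)"
proof (induction m)
  case (Suc m)
  define y where "y = x ^ (2 ^ m)"
  have ny: "st y * y = y * st y"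
  proof -
    have "st y = st x ^ (2 ^ m)" by (simp add: y_def st_power)
    moreover have "st x ^ (2 ^ m) * x ^ (2 ^ m) = x ^ (2 ^ m) * st x ^ (2 ^ m)"
    proof -
      have c1: "st x * x ^ (2 ^ m) = x ^ (2 ^ m) * st x" by (rule commute_power[OF n])
      have "x ^ (2 ^ m) * st x ^ (2 ^ m) = st x ^ (2 ^ m) * x ^ (2 ^ m)"
        by (rule commute_power) (use c1 in simp)
      then show ?thesis by simp
    qed
    ultimately show ?thesis by (simp add: y_def)
  qed
  have "x ^ (2 ^ Suc m) = y * y" by (simp add: y_def power_mult[symmetric] power_add[symmetric] mult_2)
  then have "norm (x ^ (2 ^ Suc m)) = (norm y)^2" using normal_sq_norm[OF ny] by simp
  also have "\<dots> = (norm x) ^ (2 ^ Suc m)" using Suc by (simp add: y_def power_mult[symmetric] mult.commute)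
  finally show ?case .
qed simp

lemma exp_beats_lin:
  fixes t :: real and d :: nat
  assumes t: "t > 1" and h: "\<And>m. t ^ (2 ^ m) \<le> 2 ^ m * d + 1"
  shows False
proof -
  obtain m where m: "(2 * d + 1) / (t - 1)^2 < 2 ^ m"
    using real_arch_pow[of 2 "(2 * d + 1) / (t - 1)^2"] by auto
  define n :: nat where "n = 2 ^ m"
  have n1: "n \<ge> 1" by (simp add: n_def)
  have "1 + real n * (t - 1) \<le> t ^ n"
    using Bernoulli_inequality[of "t - 1" n] t by simp
  then have b: "real n * (t - 1) \<le> t ^ n" by simp
  have "(real n * (t - 1))^2 \<le> (t ^ n)^2"
    using b t by (intro power_mono) auto
  also have "(t ^ n)^2 = t ^ (2 ^ Suc m)" by (simp add: n_def power_mult[symmetric] mult.commute)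
  also have "\<dots> \<le> 2 ^ Suc m * d + 1" by (rule h)
  also have "\<dots> \<le> real n * (2 * d + 1)" using n1 by (simp add: n_def algebra_simps)
  finally have "real n * (real n * (t - 1)^2) \<le> real n * (2 * d + 1)"
    by (simp add: power2_eq_square algebra_simps)
  then have "real n * (t - 1)^2 \<le> 2 * d + 1" using n1 by simp
  moreover have "(2 * d + 1) < real n * (t - 1)^2"
    using m t by (simp add: n_def pos_divide_less_eq)
  ultimately show False by simp
qed

lemma peval_norm:
  fixes B :: real
  assumes u: "unitary w" and hB: "\<And>z. cmod z = 1 \<Longrightarrow> cmod (poly P z) \<le> B"
  shows "norm (peval w P) \<le> B"
proof (rule ccontr)
  assume c: "\<not> norm (peval w P) \<le> B"
  define x where "x = peval w P"
  define d where "d = degree P"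
  have "cmod (poly P 1) \<le> B" using hB[of 1] by simp
  then have B0: "B \<ge> 0" by (meson norm_ge_zero order_trans)
  have nw: "norm w \<le> 1" using unitary_norm[OF u] by simp
  have key: "norm x ^ (2 ^ m) \<le> (2 ^ m * d + 1) * B ^ (2 ^ m)" for m
  proof -
    have "norm x ^ (2 ^ m) = norm (x ^ (2 ^ m))"
      by (rule normal_pow2_norm[symmetric]) (simp add: x_def peval_normal[OF u])
    also have "x ^ (2 ^ m) = peval w (P ^ (2 ^ m))" by (simp add: x_def peval_power)
    also have "norm \<dots> \<le> (real (degree (P ^ (2 ^ m))) + 1) * B ^ (2 ^ m)"
    proof (rule peval_norm_coeffB[OF nw])
      fix z :: complex assume "cmod z = 1"
      then have "cmod (poly P z) \<le> B" by (rule hB)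
      then show "cmod (poly (P ^ 2 ^ m) z) \<le> B ^ 2 ^ m"
        by (simp add: norm_power power_mono)
    qed
    also have "\<dots> \<le> (2 ^ m * d + 1) * B ^ (2 ^ m)"
    proof (rule mult_right_mono)
      have dd: "degree (P ^ (2 ^ m)) \<le> 2 ^ m * d"
        using degree_power_le[of P "2 ^ m"] by (simp add: d_def mult.commute)
      show "real (degree (P ^ 2 ^ m)) + 1 \<le> real (2 ^ m * d + 1)"
        using of_nat_mono[OF dd] by simp
    qed (use B0 in simp)
    finally show ?thesis .
  qed
  show False
  proof (cases "B = 0")
    case True
    then show False using key[of 0] c by (simp add: x_def)
  next
    case False
    then have Bp: "B > 0" using B0 by simp
    define t where "t = norm x / B"
    have t1: "t > 1" using c Bp by (simp add: t_def x_def)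
    show False
    proof (rule exp_beats_lin[OF t1])
      fix m
      have "t ^ (2 ^ m) = norm x ^ (2 ^ m) / B ^ (2 ^ m)" by (simp add: t_def power_divide)
      also have "\<dots> \<le> (2 ^ m * d + 1)" using key[of m] Bp by (simp add: pos_divide_le_eq)
      finally show "t ^ (2 ^ m) \<le> 2 ^ m * d + 1" .
    qed
  qed
qed

end


type_synonym lr = "complex poly \<times> nat"

fun lp :: "lr \<Rightarrow> complex \<Rightarrow> complex" where
  "lp (P, D) z = poly P z / z ^ D"

fun ladd :: "lr \<Rightarrow> lr \<Rightarrow> lr" where
  "ladd (P, D) (Q, E) = (monom 1 E * P + monom 1 D * Q, D + E)"

fun lmul :: "lr \<Rightarrow> lr \<Rightarrow> lr" where
  "lmul (P, D) (Q, E) = (P * Q, D + E)"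

fun lsc :: "complex \<Rightarrow> lr \<Rightarrow> lr" where
  "lsc c (P, D) = (smult c P, D)"

definition lsub :: "lr \<Rightarrow> lr \<Rightarrow> lr" where
  "lsub R S = ladd R (lsc (-1) S)"

fun lstar :: "lr \<Rightarrow> lr" where
  "lstar (P, D) = ((\<Sum>i\<le>degree P. monom (cnj (coeff P i)) (D + degree P - i)), degree P)"

fun lrot :: "complex \<Rightarrow> lr \<Rightarrow> lr" where
  "lrot c (P, D) = (smult (cnj c ^ D) (pcompose P [:0, c:]), D)"

fun lK :: "lr \<Rightarrow> real" where
  "lK (P, D) = (real (degree P) + 1) * (real D + real (degree P))"

lemma lp_ladd: "z \<noteq> 0 \<Longrightarrow> lp (ladd R S) z = lp R z + lp S z"
  by (cases R; cases S) (simp add: poly_monom field_simps power_add)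

lemma lp_lmul: "lp (lmul R S) z = lp R z * lp S z"
  by (cases R; cases S) (simp add: power_add)

lemma lp_lsc: "lp (lsc c R) z = c * lp R z"
  by (cases R) simp

lemma lp_lsub: "z \<noteq> 0 \<Longrightarrow> lp (lsub R S) z = lp R z - lp S z"
  by (simp add: lsub_def lp_ladd lp_lsc)

lemma cnj_unit: assumes "cmod z = 1" shows "cnj z = 1 / z"
proof -
  have "z * cnj z = 1" using complex_norm_square[of z] assms by simp
  moreover have "z \<noteq> 0" using assms by auto
  ultimately show ?thesis by (simp add: eq_divide_eq mult.commute)
qed

lemma lp_lstar: assumes z: "cmod z = 1" shows "lp (lstar R) z = cnj (lp R z)"
proof (cases R)
  case (Pair P D)
  have z0: "z \<noteq> 0" using z by auto
  have cz: "cnj z = 1 / z" by (rule cnj_unit[OF z])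
  let ?d = "degree P"
  have "lp (lstar R) z = (\<Sum>i\<le>?d. cnj (coeff P i) * z ^ (D + ?d - i)) / z ^ ?d"
    by (simp add: Pair poly_sum poly_monom)
  also have "\<dots> = (\<Sum>i\<le>?d. cnj (coeff P i) * z ^ (D + ?d - i) / z ^ ?d)"
    by (simp add: sum_divide_distrib)
  also have "\<dots> = (\<Sum>i\<le>?d. cnj (coeff P i) * cnj z ^ i * z ^ D)"
  proof (rule sum.cong)
    fix i assume "i \<in> {..?d}"
    then have "z ^ (D + ?d - i) = z ^ D * z ^ (?d - i)" and "z ^ ?d = z ^ i * z ^ (?d - i)"
      by (simp_all flip: power_add)
    then show "cnj (coeff P i) * z ^ (D + ?d - i) / z ^ ?d = cnj (coeff P i) * cnj z ^ i * z ^ D"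
      using z0 by (simp add: cz power_divide field_simps)
  qed simp
  also have "\<dots> = cnj (poly P z) * z ^ D"
    by (simp add: poly_altdef sum_distrib_right)
  also have "\<dots> = cnj (lp R z)"
    using z0 by (simp add: Pair cz power_divide field_simps)
  finally show ?thesis .
qed

lemma lp_lrot: assumes c: "cmod c = 1" shows "lp (lrot c R) z = lp R (c * z)"
proof (cases R)
  case (Pair P D)
  have c0: "c \<noteq> 0" using c by auto
  have "cnj c = 1 / c" by (rule cnj_unit[OF c])
  then have e: "cnj c ^ D = 1 / c ^ D" by (simp add: power_one_over)
  have "lp (lrot c R) z = (1 / c ^ D) * poly P (c * z) / z ^ D"
    by (simp add: Pair poly_pcompose e mult.commute)
  also have "\<dots> = lp R (c * z)" by (simp add: Pair power_mult_distrib mult.commute)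
  finally show ?thesis .
qed

lemma lp_norm_poly: "cmod z = 1 \<Longrightarrow> cmod (lp (P, D) z) = cmod (poly P z)"
  by (simp add: norm_divide norm_power)

context cstar
begin

fun ev :: "'a \<Rightarrow> lr \<Rightarrow> 'a" where
  "ev w (P, D) = st w ^ D * peval w P"

lemma unitary_pow_cancel: "unitary w \<Longrightarrow> st w ^ (a + b) * w ^ b = st w ^ a"
proof (induction b)
  case (Suc b)
  have "st w ^ (a + Suc b) * w ^ Suc b = (st w ^ (a + b) * st w) * (w * w ^ b)"
    by (simp only: add_Suc_right power_Suc2[of "st w"] power_Suc[of w])
  also have "\<dots> = st w ^ (a + b) * (st w * w) * w ^ b"
    by (simp only: mult.assoc)
  also have "\<dots> = st w ^ a" using Suc by (simp add: unitary_def)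
  finally show ?case .
qed simp

lemma st_w_commute_peval: "unitary w \<Longrightarrow> st w * peval w P = peval w P * st w"
  unfolding peval_def by (rule commute_peval_gen) (simp add: unitary_def)

lemma st_w_pow_commute_peval: "unitary w \<Longrightarrow> st w ^ n * peval w P = peval w P * st w ^ n"
  using commute_power[OF st_w_commute_peval[symmetric]] by simp

lemma ev_ladd: "unitary w \<Longrightarrow> ev w (ladd R S) = ev w R + ev w S"
proof (cases R; cases S)
  fix P D Q E assume u: "unitary w" and R: "R = (P, D)" and S: "S = (Q, E)"
  have "ev w (ladd R S) = st w ^ (D + E) * w ^ E * peval w P + st w ^ (E + D) * w ^ D * peval w Q"
    by (simp add: R S peval_add peval_mult peval_monom distrib_left mult.assoc add.commute)
  also have "\<dots> = ev w R + ev w S" by (simp add: R S unitary_pow_cancel[OF u])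
  finally show ?thesis .
qed

lemma ev_lmul: "unitary w \<Longrightarrow> ev w (lmul R S) = ev w R * ev w S"
proof (cases R; cases S)
  fix P D Q E assume u: "unitary w" and R: "R = (P, D)" and S: "S = (Q, E)"
  have "ev w R * ev w S = st w ^ D * (peval w P * st w ^ E) * peval w Q" by (simp add: R S mult.assoc)
  also have "\<dots> = st w ^ (D + E) * (peval w P * peval w Q)"
    by (simp add: st_w_pow_commute_peval[OF u, symmetric] mult.assoc power_add)
  finally show ?thesis by (simp add: R S peval_mult)
qed

lemma ev_lsc: "ev w (lsc c R) = sc c (ev w R)"
  by (cases R) (simp add: peval_smult sc_mult_right)

lemma ev_lsub: "unitary w \<Longrightarrow> ev w (lsub R S) = ev w R - ev w S"
  by (simp add: lsub_def ev_ladd ev_lsc)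

lemma ev_const: "ev w ([:c:], 0) = sc c 1"
  by (simp add: peval_const)

lemma peval_sum: "peval w (sum f A) = (\<Sum>i\<in>A. peval w (f i))"
  by (induction A rule: infinite_finite_induct) (auto simp: peval_add)

lemma peval_monom_c: "peval w (monom c n) = sc c (w ^ n)"
proof -
  have "monom c n = smult c (monom 1 n)" by (simp add: smult_monom)
  then show ?thesis by (simp add: peval_smult peval_monom)
qed

lemma ev_lstar: assumes u: "unitary w" shows "ev w (lstar R) = st (ev w R)"
proof (cases R)
  case (Pair P D)
  let ?d = "degree P"
  have "ev w (lstar R) = st w ^ ?d * (\<Sum>i\<le>?d. sc (cnj (coeff P i)) (w ^ (D + ?d - i)))"
    by (simp add: Pair peval_sum peval_monom_c)
  also have "\<dots> = (\<Sum>i\<le>?d. sc (cnj (coeff P i)) (st w ^ ?d * w ^ (D + ?d - i)))"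
    by (simp add: sum_distrib_left sc_mult_right)
  also have "\<dots> = (\<Sum>i\<le>?d. sc (cnj (coeff P i)) (st w ^ i * w ^ D))"
  proof (rule sum.cong)
    fix i assume i: "i \<in> {..?d}"
    have "st w ^ ?d * w ^ (D + ?d - i) = (st w ^ (i + (?d - i)) * w ^ (?d - i)) * w ^ D"
      using i by (simp add: mult.assoc power_add[symmetric] add.commute)
    also have "\<dots> = st w ^ i * w ^ D" by (simp add: unitary_pow_cancel[OF u])
    finally show "sc (cnj (coeff P i)) (st w ^ ?d * w ^ (D + ?d - i)) = sc (cnj (coeff P i)) (st w ^ i * w ^ D)"
      by simp
  qed simp
  also have "\<dots> = st (peval w P) * w ^ D"
    by (simp add: st_peval sum_distrib_right sc_mult_left)
  also have "\<dots> = st (ev w R)"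
    by (simp add: Pair st_mult st_power)
  finally show ?thesis .
qed

lemma sc_power: "(sc c x) ^ n = sc (c ^ n) (x ^ n)"
  by (induction n) (simp_all add: sc_mult_left sc_mult_right mult.commute)

lemma ev_lrot: assumes c: "cmod c = 1" shows "ev (sc c w) R = ev w (lrot c R)"
proof (cases R)
  case (Pair P D)
  have "ev (sc c w) R = sc (cnj c) (st w) ^ D * peval w (pcompose P [:0, c:])"
    by (simp add: Pair st_sc peval_pcompose)
  also have "\<dots> = ev w (lrot c R)"
    by (simp add: Pair sc_power peval_smult sc_mult_left sc_mult_right)
  finally show ?thesis .
qed

lemma unitary_sc: "cmod c = 1 \<Longrightarrow> unitary w \<Longrightarrow> unitary (sc c w)"
proof -
  assume c: "cmod c = 1" and u: "unitary w"
  have "cnj c * c = 1" using c by (simp add: complex_norm_square[symmetric] mult.commute)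
  then show ?thesis using u
    by (simp add: unitary_def st_sc sc_mult_left sc_mult_right mult.commute)
qed

lemma ev_norm:
  fixes B :: real
  assumes u: "unitary w" and hB: "\<And>z. cmod z = 1 \<Longrightarrow> cmod (lp R z) \<le> B"
  shows "norm (ev w R) \<le> B"
proof (cases R)
  case (Pair P D)
  have n1: "norm (st w ^ D) \<le> 1"
    using unitary_norm[OF unitary_st[OF u]]
    by (metis norm_power_ineq power_one)
  have "norm (peval w P) \<le> B"
    by (rule peval_norm[OF u]) (use hB lp_norm_poly in \<open>force simp: Pair\<close>)
  then have "norm (st w ^ D) * norm (peval w P) \<le> 1 * B"
    by (intro mult_mono n1) auto
  then show ?thesis by (simp add: Pair) (meson norm_mult_ineq order_trans)
qed

end


context cstar
begin

lemma pow_norm_le1: "norm (x::'a) \<le> 1 \<Longrightarrow> norm (x ^ n) \<le> 1"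
  by (metis norm_power_ineq order_trans power_le_one norm_ge_zero)

lemma norm_prod_diff:
  assumes "norm (a::'a) \<le> 1" "norm b \<le> 1" "norm a' \<le> 1" "norm b' \<le> 1"
  shows "norm (a * b - a' * b') \<le> norm (a - a') + norm (b - b')"
proof -
  have "a * b - a' * b' = (a - a') * b + a' * (b - b')" by (simp add: algebra_simps)
  then have "norm (a * b - a' * b') \<le> norm ((a - a') * b) + norm (a' * (b - b'))"
    by (metis norm_triangle_ineq)
  also have "norm ((a - a') * b) \<le> norm (a - a') * 1"
    by (rule order_trans[OF norm_mult_ineq]) (intro mult_left_mono assms; simp)
  also have "norm (a' * (b - b')) \<le> 1 * norm (b - b')"
    by (rule order_trans[OF norm_mult_ineq]) (intro mult_right_mono assms; simp)
  finally show ?thesis by simp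
qed

lemma norm_pow_diff:
  assumes "norm (x::'a) \<le> 1" "norm y \<le> 1"
  shows "norm (x ^ n - y ^ n) \<le> n * norm (x - y)"
proof (induction n)
  case (Suc n)
  have "norm (x ^ Suc n - y ^ Suc n) = norm (x * x ^ n - y * y ^ n)" by simp
  also have "\<dots> \<le> norm (x - y) + norm (x ^ n - y ^ n)"
    by (rule norm_prod_diff) (simp_all add: assms pow_norm_le1)
  also have "\<dots> \<le> norm (x - y) + n * norm (x - y)" using Suc by simp
  finally show ?case by (simp add: algebra_simps)
qed simp

lemma ev_expand: "ev w (P, D) = (\<Sum>i\<le>degree P. sc (coeff P i) (st w ^ D * w ^ i))"
  by (simp add: peval_def sum_distrib_left sc_mult_right)

lemma lp_bound_coeff:
  assumes hB: "\<And>z. cmod z = 1 \<Longrightarrow> cmod (lp (P, D) z) \<le> B"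
  shows "cmod (coeff P i) \<le> B"
  by (rule coeff_bound) (use hB lp_norm_poly in force)

lemma ev_lip:
  assumes u1: "unitary w1" and u2: "unitary w2"
    and hB: "\<And>z. cmod z = 1 \<Longrightarrow> cmod (lp (P, D) z) \<le> B"
  shows "norm (ev w1 (P, D) - ev w2 (P, D)) \<le> lK (P, D) * B * norm (w1 - w2)"
proof -
  let ?d = "degree P"
  have n1: "norm w1 \<le> 1" "norm w2 \<le> 1" "norm (st w1) \<le> 1" "norm (st w2) \<le> 1"
    using unitary_norm[OF u1] unitary_norm[OF u2] by simp_all
  have "cmod (lp (P, D) 1) \<le> B" using hB[of 1] by simp
  then have B0: "B \<ge> 0" using norm_ge_zero[of "lp (P, D) 1"] by linarith
  have X: "norm (st w1 ^ D * w1 ^ i - st w2 ^ D * w2 ^ i) \<le> (real D + real ?d) * norm (w1 - w2)"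
    if i: "i \<le> ?d" for i
  proof -
    have "norm (st w1 ^ D * w1 ^ i - st w2 ^ D * w2 ^ i) \<le> norm (st w1 ^ D - st w2 ^ D) + norm (w1 ^ i - w2 ^ i)"
      by (rule norm_prod_diff) (simp_all add: n1 pow_norm_le1)
    also have "\<dots> \<le> D * norm (st w1 - st w2) + i * norm (w1 - w2)"
      by (intro add_mono norm_pow_diff n1)
    also have "norm (st w1 - st w2) = norm (w1 - w2)" by (metis norm_st st_diff)
    also have "D * norm (w1 - w2) + i * norm (w1 - w2) \<le> (real D + real ?d) * norm (w1 - w2)"
      using i by (simp add: algebra_simps mult_right_mono)
    finally show ?thesis by simp
  qed
  have "ev w1 (P, D) - ev w2 (P, D) = (\<Sum>i\<le>?d. sc (coeff P i) (st w1 ^ D * w1 ^ i - st w2 ^ D * w2 ^ i))"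
    by (simp only: ev_expand) (simp add: sum_subtractf sc_diff)
  also have "norm \<dots> \<le> (\<Sum>i\<le>?d. cmod (coeff P i) * norm (st w1 ^ D * w1 ^ i - st w2 ^ D * w2 ^ i))"
    by (rule order_trans[OF norm_sum]) (simp add: norm_sc)
  also have "\<dots> \<le> (\<Sum>i\<le>?d. B * ((real D + real ?d) * norm (w1 - w2)))"
    by (intro sum_mono mult_mono X lp_bound_coeff[OF hB]) (simp_all add: B0)
  also have "\<dots> = lK (P, D) * B * norm (w1 - w2)" by (simp add: algebra_simps)
  finally show ?thesis .
qed

definition comm :: "'a \<Rightarrow> 'a \<Rightarrow> 'a" where "comm x a = x * a - a * x"

lemma comm_prod:
  assumes "norm x \<le> 1" "norm y \<le> 1"
  shows "norm (comm (x * y) a) \<le> norm (comm x a) + norm (comm y a)"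
proof -
  have "comm (x * y) a = x * comm y a + comm x a * y" by (simp add: comm_def algebra_simps)
  then have "norm (comm (x * y) a) \<le> norm (x * comm y a) + norm (comm x a * y)"
    by (metis norm_triangle_ineq)
  also have "norm (x * comm y a) \<le> 1 * norm (comm y a)"
    by (rule order_trans[OF norm_mult_ineq]) (intro mult_right_mono assms; simp)
  also have "norm (comm x a * y) \<le> norm (comm x a) * 1"
    by (rule order_trans[OF norm_mult_ineq]) (intro mult_left_mono assms; simp)
  finally show ?thesis by simp
qed

lemma comm_pow:
  assumes "norm x \<le> 1"
  shows "norm (comm (x ^ n) a) \<le> n * norm (comm x a)"
proof (induction n)
  case 0 then show ?case by (simp add: comm_def)
next
  case (Suc n)
  have "norm (comm (x ^ Suc n) a) \<le> norm (comm x a) + norm (comm (x ^ n) a)"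
    by (simp only: power_Suc) (rule comm_prod; simp add: assms pow_norm_le1)
  also have "\<dots> \<le> norm (comm x a) + n * norm (comm x a)" using Suc by simp
  finally show ?case by (simp add: algebra_simps)
qed

lemma comm_st:
  assumes u: "unitary w"
  shows "norm (comm (st w) a) \<le> norm (comm w a)"
proof -
  have "comm (st w) a = st w * (a * w - w * a) * st w"
  proof -
    have "st w * (a * w - w * a) * st w = st w * a * (w * st w) - (st w * w) * a * st w"
      by (simp add: algebra_simps)
    also have "\<dots> = st w * a - a * st w" using u by (simp add: unitary_def)
    finally show ?thesis by (simp add: comm_def)
  qed
  also have "norm \<dots> \<le> norm (st w) * norm (a * w - w * a) * norm (st w)"
  proof -
    have "norm (st w * (a * w - w * a) * st w) \<le> norm (st w * (a * w - w * a)) * norm (st w)"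
      by (rule norm_mult_ineq)
    also have "\<dots> \<le> norm (st w) * norm (a * w - w * a) * norm (st w)"
      by (intro mult_right_mono norm_mult_ineq norm_ge_zero)
    finally show ?thesis .
  qed
  also have "\<dots> = norm (comm w a)"
    using unitary_norm[OF u] by (simp add: comm_def norm_minus_commute)
  finally show ?thesis .
qed

lemma comm_sum: "comm (sum f A) a = (\<Sum>i\<in>A. comm (f i) a)"
  by (simp add: comm_def sum_distrib_left sum_distrib_right sum_subtractf)

lemma comm_sc: "comm (sc c x) a = sc c (comm x a)"
  by (simp add: comm_def sc_mult_left sc_mult_right sc_diff)

lemma ev_comm:
  assumes u: "unitary w"
    and hB: "\<And>z. cmod z = 1 \<Longrightarrow> cmod (lp (P, D) z) \<le> B"
  shows "norm (comm (ev w (P, D)) a) \<le> lK (P, D) * B * norm (comm w a)"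
proof -
  let ?d = "degree P"
  have n1: "norm w \<le> 1" "norm (st w) \<le> 1"
    using unitary_norm[OF u] by simp_all
  have "cmod (lp (P, D) 1) \<le> B" using hB[of 1] by simp
  then have B0: "B \<ge> 0" using norm_ge_zero[of "lp (P, D) 1"] by linarith
  have X: "norm (comm (st w ^ D * w ^ i) a) \<le> (real D + real ?d) * norm (comm w a)"
    if i: "i \<le> ?d" for i
  proof -
    have "norm (comm (st w ^ D * w ^ i) a) \<le> norm (comm (st w ^ D) a) + norm (comm (w ^ i) a)"
      by (rule comm_prod) (simp_all add: n1 pow_norm_le1)
    also have "\<dots> \<le> D * norm (comm (st w) a) + i * norm (comm w a)"
      by (intro add_mono comm_pow n1)
    also have "\<dots> \<le> D * norm (comm w a) + i * norm (comm w a)"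
      by (intro add_mono mult_left_mono comm_st u) simp_all
    also have "\<dots> \<le> (real D + real ?d) * norm (comm w a)"
      using i by (simp add: algebra_simps mult_right_mono)
    finally show ?thesis .
  qed
  have "comm (ev w (P, D)) a = (\<Sum>i\<le>?d. sc (coeff P i) (comm (st w ^ D * w ^ i) a))"
    by (simp only: ev_expand comm_sum comm_sc)
  also have "norm \<dots> \<le> (\<Sum>i\<le>?d. cmod (coeff P i) * norm (comm (st w ^ D * w ^ i) a))"
    by (rule order_trans[OF norm_sum]) (simp add: norm_sc)
  also have "\<dots> \<le> (\<Sum>i\<le>?d. B * ((real D + real ?d) * norm (comm w a)))"
    by (intro sum_mono mult_mono X lp_bound_coeff[OF hB]) (simp_all add: B0)
  also have "\<dots> = lK (P, D) * B * norm (comm w a)" by (simp add: algebra_simps)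
  finally show ?thesis .
qed

end


context cstar
begin

lemma sa_props:
  assumes "star_aut sc st \<phi>"
  shows "\<phi> (x + y) = \<phi> x + \<phi> y" "\<phi> (sc c x) = sc c (\<phi> x)" "\<phi> (x * y) = \<phi> x * \<phi> y"
    "\<phi> 1 = 1" "\<phi> (st x) = st (\<phi> x)"
  using assms by (simp_all add: star_aut_def)

lemma sa_0: "star_aut sc st \<phi> \<Longrightarrow> \<phi> 0 = 0"
  using sa_props(1)[of \<phi> 0 0] by (metis add_cancel_right_right)

lemma sa_minus: "star_aut sc st \<phi> \<Longrightarrow> \<phi> (- x) = - \<phi> x"
  using sa_props(1)[of \<phi> x "-x"] sa_0[of \<phi>] by (simp add: add_eq_0_iff)

lemma sa_diff: "star_aut sc st \<phi> \<Longrightarrow> \<phi> (x - y) = \<phi> x - \<phi> y"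
  by (metis diff_conv_add_uminus sa_props(1) sa_minus)

lemma sa_sum: "star_aut sc st \<phi> \<Longrightarrow> \<phi> (sum f A) = (\<Sum>i\<in>A. \<phi> (f i))"
  by (induction A rule: infinite_finite_induct) (simp_all add: sa_0 sa_props(1))

lemma sa_power: "star_aut sc st \<phi> \<Longrightarrow> \<phi> (x ^ n) = \<phi> x ^ n"
  by (induction n) (simp_all add: sa_props(3,4))

lemma sa_peval: "star_aut sc st \<phi> \<Longrightarrow> \<phi> (peval w P) = peval (\<phi> w) P"
  by (simp add: peval_def sa_sum sa_props(2) sa_power)

lemma sa_ev: "star_aut sc st \<phi> \<Longrightarrow> \<phi> (ev w R) = ev (\<phi> w) R"
  by (cases R) (simp add: sa_props(3,5) sa_power sa_peval)

lemma sa_unitary: "star_aut sc st \<phi> \<Longrightarrow> unitary w \<Longrightarrow> unitary (\<phi> w)"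
  unfolding unitary_def by (metis sa_props(3,4,5))

lemma sa_contr: "star_aut sc st \<phi> \<Longrightarrow> norm (\<phi> a) \<le> norm a"
  by (rule hom_contr) (simp_all add: sa_props)

lemma norm3: "norm ((A::'a) + B - C) \<le> norm A + norm B + norm C"
  using norm_triangle_ineq4[of "A + B" C] norm_triangle_ineq[of A B] by linarith

lemma sc_diff_left: "sc (c - d) x = sc c x - sc d x"
  by (metis diff_conv_add_uminus sc_add_left sc_minus_left)

lemma null_add: "null_seq x \<Longrightarrow> null_seq y \<Longrightarrow> null_seq (\<lambda>n. x n + y n)"
  unfolding null_seq_def using tendsto_add_zero by blast

lemma null_diff: "null_seq x \<Longrightarrow> null_seq y \<Longrightarrow> null_seq (\<lambda>n. x n - y n)"
  unfolding null_seq_def using tendsto_diff[of x 0 _ y 0] by simp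

lemma null_bound: "(\<And>n. norm (x n) \<le> b n) \<Longrightarrow> b \<longlonglongrightarrow> 0 \<Longrightarrow> null_seq x"
  unfolding null_seq_def by (rule Lim_null_comparison) auto

lemma null_norm: "null_seq x \<Longrightarrow> (\<lambda>n. norm (x n)) \<longlonglongrightarrow> 0"
  unfolding null_seq_def using tendsto_norm_zero by blast

lemma null_mult_right: "null_seq (x::nat \<Rightarrow> 'a) \<Longrightarrow> bounded_seq y \<Longrightarrow> null_seq (\<lambda>n. x n * y n)"
proof -
  assume nx: "null_seq x" and "bounded_seq y"
  then obtain B where B: "\<And>n. norm (y n) \<le> B" by (auto simp: bounded_seq_def)
  show ?thesis
  proof (rule null_bound)
    show "norm (x n * y n) \<le> norm (x n) * B" for n
      by (rule order_trans[OF norm_mult_ineq]) (intro mult_left_mono B; simp)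
    show "(\<lambda>n. norm (x n) * B) \<longlonglongrightarrow> 0"
      using tendsto_mult[OF null_norm[OF nx] tendsto_const[of B]] by simp
  qed
qed

lemma null_mult_left: "null_seq (x::nat \<Rightarrow> 'a) \<Longrightarrow> bounded_seq y \<Longrightarrow> null_seq (\<lambda>n. y n * x n)"
proof -
  assume nx: "null_seq x" and "bounded_seq y"
  then obtain B where B: "\<And>n. norm (y n) \<le> B" by (auto simp: bounded_seq_def)
  show ?thesis
  proof (rule null_bound)
    show "norm (y n * x n) \<le> B * norm (x n)" for n
      by (rule order_trans[OF norm_mult_ineq]) (intro mult_right_mono B; simp)
    show "(\<lambda>n. B * norm (x n)) \<longlonglongrightarrow> 0"
      using tendsto_mult[OF tendsto_const[of B] null_norm[OF nx]] by simp
  qed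
qed

lemma null_ev_less: "null_seq x \<Longrightarrow> r > 0 \<Longrightarrow> eventually (\<lambda>n. norm (x n) < r) sequentially"
  unfolding null_seq_def using order_tendstoD(2)[OF tendsto_norm_zero, of x sequentially r] by auto

lemma forward:
  assumes ca: "circle_action sc st \<alpha>" and R: "rokhlin_circle sc st \<alpha>"
    and fin: "finite F" and ep: "\<epsilon> > 0"
  shows "\<exists>u. unitary_el st u \<and> (\<forall>\<zeta>\<in>sphere 0 1. norm (\<alpha> \<zeta> u - sc \<zeta> u) < \<epsilon>) \<and>
             (\<forall>a\<in>F. norm (a * u - u * a) < \<epsilon>)"
proof -
  define S :: "complex set" where "S = sphere 0 1"
  define CT where "CT = {f::complex \<Rightarrow> complex. continuous_on (sphere 0 1) f}"
  obtain \<Phi> :: "(complex \<Rightarrow> complex) \<Rightarrow> nat \<Rightarrow> 'a" where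
    R1: "\<forall>f\<in>CT. bounded_seq (\<Phi> f) \<and> alpha_cont_seq \<alpha> (\<Phi> f)" and
    R2: "\<forall>f\<in>CT. \<forall>g\<in>CT. (\<forall>z\<in>sphere 0 1. f z = g z) \<longrightarrow> null_seq (\<lambda>n. \<Phi> f n - \<Phi> g n)" and
    R4: "\<forall>f\<in>CT. \<forall>c. null_seq (\<lambda>n. \<Phi> (\<lambda>z. c * f z) n - sc c (\<Phi> f n))" and
    R5: "\<forall>f\<in>CT. \<forall>g\<in>CT. null_seq (\<lambda>n. \<Phi> (\<lambda>z. f z * g z) n - \<Phi> f n * \<Phi> g n)" and
    R6: "\<forall>f\<in>CT. null_seq (\<lambda>n. \<Phi> (\<lambda>z. cnj (f z)) n - st (\<Phi> f n))" and
    R7: "null_seq (\<lambda>n. \<Phi> (\<lambda>z. 1) n - 1)" and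
    R8: "\<forall>f\<in>CT. \<forall>a. null_seq (\<lambda>n. \<Phi> f n * a - a * \<Phi> f n)" and
    R9: "\<forall>f\<in>CT. \<forall>\<zeta>\<in>sphere 0 1. null_seq (\<lambda>n. \<alpha> \<zeta> (\<Phi> f n) - \<Phi> (\<lambda>z. f (cnj \<zeta> * z)) n)"
    using R unfolding rokhlin_circle_def Let_def CT_def by blast
  have sa: "star_aut sc st (\<alpha> \<zeta>)" if "\<zeta> \<in> S" for \<zeta>
    using ca that by (simp add: circle_action_def S_def)
  have cnjCT: "(\<lambda>z. cnj z) \<in> CT" and idCT: "(\<lambda>z. z) \<in> CT" and oneCT: "(\<lambda>z. 1) \<in> CT"
    by (simp_all add: CT_def continuous_intros)
  have zcCT: "(\<lambda>z. z * cnj z) \<in> CT" "(\<lambda>z. cnj z * z) \<in> CT"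
    by (simp_all add: CT_def continuous_intros)
  define x where "x n = \<Phi> (\<lambda>z. cnj z) n" for n
  define y where "y n = \<Phi> (\<lambda>z. z) n" for n
  have bx: "bounded_seq x" using R1 cnjCT by (simp add: x_def[abs_def])
  then obtain B0 where B0: "\<And>n. norm (x n) \<le> B0" by (auto simp: bounded_seq_def)
  define B where "B = max B0 1"
  have B: "\<And>n. norm (x n) \<le> B" using B0 by (simp add: B_def le_max_iff_disj)
  have Bpos: "B > 0" by (simp add: B_def)
  have acs: "alpha_cont_seq \<alpha> x" using R1 cnjCT by (simp add: x_def[abs_def])
  have h1: "null_seq (\<lambda>n. y n - st (x n))"
    using bspec[OF R6 cnjCT] by (simp add: x_def y_def)
  have h4: "null_seq (\<lambda>n. \<Phi> (\<lambda>z. 1) n - 1)" by (rule R7)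
  have nb: "null_seq (\<lambda>n. st (x n) * x n - 1)"
  proof -
    have h2: "null_seq (\<lambda>n. \<Phi> (\<lambda>z. z * cnj z) n - y n * x n)"
      using R5 idCT cnjCT by (simp add: x_def y_def)
    have h3: "null_seq (\<lambda>n. \<Phi> (\<lambda>z. z * cnj z) n - \<Phi> (\<lambda>z. 1) n)"
      using R2 zcCT oneCT by (simp add: complex_norm_square[symmetric])
    have hm: "null_seq (\<lambda>n. (st (x n) - y n) * x n)"
    proof (rule null_mult_right[OF _ bx])
      show "null_seq (\<lambda>n. st (x n) - y n)"
        using null_diff[OF null_diff[OF h1 h1] h1] by (simp add: algebra_simps)
    qed
    have "null_seq (\<lambda>n. (st (x n) - y n) * x n - (\<Phi> (\<lambda>z. z * cnj z) n - y n * x n) + (\<Phi> (\<lambda>z. z * cnj z) n - \<Phi> (\<lambda>z. 1) n) + (\<Phi> (\<lambda>z. 1) n - 1))"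
      by (intro null_add null_diff hm h2 h3 h4)
    then show ?thesis by (simp add: algebra_simps)
  qed
  have nc: "null_seq (\<lambda>n. x n * st (x n) - 1)"
  proof -
    have h2: "null_seq (\<lambda>n. \<Phi> (\<lambda>z. cnj z * z) n - x n * y n)"
      using R5 idCT cnjCT by (simp add: x_def y_def)
    have h3: "null_seq (\<lambda>n. \<Phi> (\<lambda>z. cnj z * z) n - \<Phi> (\<lambda>z. 1) n)"
      using R2 zcCT oneCT by (simp add: complex_norm_square[symmetric] mult.commute)
    have hm: "null_seq (\<lambda>n. x n * (st (x n) - y n))"
    proof (rule null_mult_left[OF _ bx])
      show "null_seq (\<lambda>n. st (x n) - y n)"
        using null_diff[OF null_diff[OF h1 h1] h1] by (simp add: algebra_simps)
    qed
    have "null_seq (\<lambda>n. x n * (st (x n) - y n) - (\<Phi> (\<lambda>z. cnj z * z) n - x n * y n) + (\<Phi> (\<lambda>z. cnj z * z) n - \<Phi> (\<lambda>z. 1) n) + (\<Phi> (\<lambda>z. 1) n - 1))"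
      by (intro null_add null_diff hm h2 h3 h4)
    then show ?thesis by (simp add: algebra_simps)
  qed
  have nd: "null_seq (\<lambda>n. x n * a - a * x n)" for a
    using R8 cnjCT by (simp add: x_def)
  have ne: "null_seq (\<lambda>n. \<alpha> \<zeta> (x n) - sc \<zeta> (x n))" if z: "\<zeta> \<in> S" for \<zeta>
  proof -
    have e1: "null_seq (\<lambda>n. \<alpha> \<zeta> (x n) - \<Phi> (\<lambda>z. \<zeta> * cnj z) n)"
      using bspec[OF bspec[OF R9 cnjCT], of \<zeta>] z by (simp add: x_def S_def)
    have e2: "null_seq (\<lambda>n. \<Phi> (\<lambda>z. \<zeta> * cnj z) n - sc \<zeta> (x n))"
      using R4 cnjCT by (simp add: x_def)
    show ?thesis using null_add[OF e1 e2] by simp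
  qed
  have U: "eventually (\<lambda>n. \<forall>\<zeta>\<in>S. norm (\<alpha> \<zeta> (x n) - sc \<zeta> (x n)) \<le> 3 * \<eta>) sequentially"
    if eta: "\<eta> > 0" for \<eta>
  proof -
    have "\<forall>\<zeta>0\<in>S. \<exists>d>0. \<forall>\<zeta>\<in>S. cmod (\<zeta> - \<zeta>0) < d \<longrightarrow> (\<forall>n. norm (\<alpha> \<zeta> (x n) - \<alpha> \<zeta>0 (x n)) \<le> \<eta>)"
      using acs eta unfolding alpha_cont_seq_def S_def by blast
    then obtain d where d: "\<And>\<zeta>0. \<zeta>0 \<in> S \<Longrightarrow> d \<zeta>0 > 0 \<and> (\<forall>\<zeta>\<in>S. cmod (\<zeta> - \<zeta>0) < d \<zeta>0 \<longrightarrow> (\<forall>n. norm (\<alpha> \<zeta> (x n) - \<alpha> \<zeta>0 (x n)) \<le> \<eta>))"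
      by metis
    define r where "r c = min (d c) (\<eta> / B)" for c
    have rpos: "r c > 0" if "c \<in> S" for c using d[OF that] eta Bpos by (simp add: r_def)
    obtain T where TS: "T \<subseteq> S" and fT: "finite T" and cov: "S \<subseteq> (\<Union>c\<in>T. ball c (r c))"
    proof (rule compactE_image[of S S "\<lambda>c. ball c (r c)"])
      show "compact S" by (simp add: S_def)
      show "open (ball c (r c))" for c by simp
      show "S \<subseteq> (\<Union>c\<in>S. ball c (r c))" using rpos by force
    qed blast
    have ev: "eventually (\<lambda>n. \<forall>c\<in>T. norm (\<alpha> c (x n) - sc c (x n)) < \<eta>) sequentially"
      using fT by (rule eventually_ball_finite) (use TS ne null_ev_less eta in blast)
    show ?thesis
    proof (rule eventually_mono[OF ev], intro ballI)
      fix n \<zeta> assume hT: "\<forall>c\<in>T. norm (\<alpha> c (x n) - sc c (x n)) < \<eta>" and z: "\<zeta> \<in> S"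
      then obtain c where cT: "c \<in> T" and zc: "\<zeta> \<in> ball c (r c)" using cov by blast
      have cS: "c \<in> S" using cT TS by blast
      have dz: "cmod (\<zeta> - c) < d c" and dz2: "cmod (\<zeta> - c) < \<eta> / B"
        using zc by (simp_all add: r_def dist_norm norm_minus_commute)
      have t1: "norm (\<alpha> \<zeta> (x n) - \<alpha> c (x n)) \<le> \<eta>" using d[OF cS] z dz by blast
      have t2: "norm (\<alpha> c (x n) - sc c (x n)) \<le> \<eta>" using hT cT by (meson less_imp_le)
      have t3: "norm (sc c (x n) - sc \<zeta> (x n)) \<le> \<eta>"
      proof -
        have "norm (sc c (x n) - sc \<zeta> (x n)) = cmod (\<zeta> - c) * norm (x n)"
          by (simp add: sc_diff_left[symmetric] norm_sc norm_minus_commute)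
        also have "\<dots> \<le> (\<eta> / B) * B"
          using dz2 B[of n] eta Bpos by (intro mult_mono) auto
        finally show ?thesis using Bpos by simp
      qed
      have "\<alpha> \<zeta> (x n) - sc \<zeta> (x n) = (\<alpha> \<zeta> (x n) - \<alpha> c (x n)) + (\<alpha> c (x n) - sc c (x n)) + (sc c (x n) - sc \<zeta> (x n))"
        by simp
      also have "norm \<dots> \<le> \<eta> + \<eta> + \<eta>"
        by (rule order_trans[OF norm_triangle_ineq] add_mono)+ (use t1 t2 t3 in auto)
      finally show "norm (\<alpha> \<zeta> (x n) - sc \<zeta> (x n)) \<le> 3 * \<eta>" by simp
    qed
  qed
  define M where "M = (\<Sum>a\<in>F. norm a)"
  have M0: "M \<ge> 0" by (simp add: M_def sum_nonneg)
  have aM: "norm a \<le> M" if "a \<in> F" for a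
    unfolding M_def by (rule member_le_sum) (use fin that in auto)
  define \<eta> where "\<eta> = \<epsilon> / 8"
  define \<delta> where "\<delta> = min (1/4) (\<epsilon> / (16 * B * (M + 1)))"
  have eta: "\<eta> > 0" using ep by (simp add: \<eta>_def)
  have dpos: "\<delta> > 0" using ep Bpos M0 by (simp add: \<delta>_def)
  have "eventually (\<lambda>n. norm (st (x n) * x n - 1) < \<delta> \<and> norm (x n * st (x n) - 1) < \<delta> \<and>
      (\<forall>a\<in>F. norm (x n * a - a * x n) < \<eta>) \<and> (\<forall>\<zeta>\<in>S. norm (\<alpha> \<zeta> (x n) - sc \<zeta> (x n)) \<le> 3 * \<eta>)) sequentially"
    using null_ev_less[OF nb dpos] null_ev_less[OF nc dpos]
      eventually_ball_finite[OF fin, of "\<lambda>n a. norm (x n * a - a * x n) < \<eta>"] null_ev_less[OF nd eta]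
      U[OF eta]
    by (auto elim: eventually_elim2 eventually_mono intro!: eventually_conj)
  then obtain n where hb: "norm (st (x n) * x n - 1) < \<delta>" and hc: "norm (x n * st (x n) - 1) < \<delta>"
    and hd: "\<forall>a\<in>F. norm (x n * a - a * x n) < \<eta>"
    and he: "\<forall>\<zeta>\<in>S. norm (\<alpha> \<zeta> (x n) - sc \<zeta> (x n)) \<le> 3 * \<eta>"
    by (auto simp: eventually_sequentially)
  have d14: "\<delta> \<le> 1/4" by (simp add: \<delta>_def)
  have "norm (1 - st (x n) * x n) < 1/2" using hb d14 by (simp add: norm_minus_commute)
  moreover have "norm (1 - x n * st (x n)) < 1" using hc d14 by (simp add: norm_minus_commute)
  ultimately obtain u where u: "unitary u"
    and un: "norm (u - x n) \<le> 2 * norm (x n) * norm (1 - st (x n) * x n)"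
    using approx_unitary by blast
  define k where "k = norm (u - x n)"
  have "k \<le> 2 * B * \<delta>"
  proof -
    have "k \<le> 2 * norm (x n) * norm (1 - st (x n) * x n)" using un by (simp add: k_def)
    also have "\<dots> \<le> 2 * B * \<delta>"
      using B[of n] hb Bpos by (intro mult_mono) (auto simp: norm_minus_commute)
    finally show ?thesis .
  qed
  also have "2 * B * \<delta> \<le> 2 * B * (\<epsilon> / (16 * B * (M + 1)))"
    using Bpos by (intro mult_left_mono) (auto simp: \<delta>_def)
  also have "\<dots> = \<epsilon> / (8 * (M + 1))"
  proof -
    have e1: "16 * B * (M + 1) = (2 * B) * (8 * (M + 1))" by simp
    have "2 * B * (\<epsilon> / (16 * B * (M + 1))) = ((2 * B) * \<epsilon>) / ((2 * B) * (8 * (M + 1)))"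
      by (simp only: e1 times_divide_eq_right)
    also have "\<dots> = \<epsilon> / (8 * (M + 1))" using Bpos by (subst mult_divide_mult_cancel_left) auto
    finally show ?thesis .
  qed
  finally have k: "k \<le> \<epsilon> / (8 * (M + 1))" .
  have k0: "k \<ge> 0" by (simp add: k_def)
  have k8: "k \<le> \<epsilon> / 8"
  proof -
    have "\<epsilon> / (8 * (M + 1)) \<le> \<epsilon> / 8" using ep M0 by (intro divide_left_mono) auto
    then show ?thesis using k by linarith
  qed
  have kM: "2 * M * k \<le> \<epsilon> / 4"
  proof -
    have "2 * M * k \<le> 2 * M * (\<epsilon> / (8 * (M + 1)))" using k M0 by (intro mult_left_mono) auto
    also have "\<dots> = (\<epsilon> / 4) * (M / (M + 1))" using M0 by (simp add: field_simps)
    also have "\<dots> \<le> (\<epsilon> / 4) * 1" using ep M0 by (intro mult_left_mono) auto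
    finally show ?thesis by simp
  qed
  show ?thesis
  proof (intro exI conjI ballI)
    show "unitary_el st u" using u by (simp add: unitary_def unitary_el_def)
  next
    fix \<zeta> :: complex assume z: "\<zeta> \<in> sphere 0 1"
    then have zS: "\<zeta> \<in> S" by (simp add: S_def)
    have "\<alpha> \<zeta> u - sc \<zeta> u = \<alpha> \<zeta> (u - x n) + (\<alpha> \<zeta> (x n) - sc \<zeta> (x n)) + sc \<zeta> (x n - u)"
      by (simp add: sa_diff[OF sa[OF zS]] sc_diff)
    also have "norm \<dots> \<le> k + 3 * \<eta> + k"
    proof (rule order_trans[OF norm_triangle_ineq] add_mono)+
      show "norm (\<alpha> \<zeta> (u - x n)) \<le> k" unfolding k_def by (rule sa_contr[OF sa[OF zS]])
      show "norm (\<alpha> \<zeta> (x n) - sc \<zeta> (x n)) \<le> 3 * \<eta>" using he zS by blast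
      show "norm (sc \<zeta> (x n - u)) \<le> k" using z by (simp add: norm_sc k_def norm_minus_commute)
    qed
    also have "\<dots> < \<epsilon>" using k8 ep by (simp add: \<eta>_def)
    finally show "norm (\<alpha> \<zeta> u - sc \<zeta> u) < \<epsilon>" .
  next
    fix a assume aF: "a \<in> F"
    have "a * u - u * a = - (x n * a - a * x n) + a * (u - x n) - (u - x n) * a"
      by (simp add: algebra_simps)
    also have "norm \<dots> \<le> \<eta> + norm a * k + k * norm a"
    proof -
      have t1: "norm (- (x n * a - a * x n)) \<le> \<eta>" using hd aF by (simp only: norm_minus_cancel) (meson less_imp_le)
      have t2: "norm (a * (u - x n)) \<le> norm a * k" unfolding k_def by (rule norm_mult_ineq)
      have t3: "norm ((u - x n) * a) \<le> k * norm a" unfolding k_def by (rule norm_mult_ineq)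
      show ?thesis using norm3[of "- (x n * a - a * x n)" "a * (u - x n)" "(u - x n) * a"] t1 t2 t3
        by linarith
    qed
    also have "\<dots> = \<eta> + 2 * norm a * k" by simp
    also have "\<dots> \<le> \<eta> + 2 * M * k" using aM[OF aF] k0 by (intro add_left_mono mult_right_mono) auto
    also have "\<dots> < \<epsilon>" using kM ep by (simp add: \<eta>_def)
    finally show "norm (a * u - u * a) < \<epsilon>" .
  qed
qed

end


lemma lp_ladd1: "cmod z = 1 \<Longrightarrow> lp (ladd R S) z = lp R z + lp S z"
  by (rule lp_ladd) auto

lemma lin_laurent:
  assumes h: "bounded_linear (h :: complex \<Rightarrow> real)"
  shows "\<exists>R. \<forall>z. cmod z = 1 \<longrightarrow> complex_of_real (h z) = lp R z"
proof -
  define a where "a = (complex_of_real (h 1) - \<i> * complex_of_real (h \<i>)) / 2"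
  define b where "b = (complex_of_real (h 1) + \<i> * complex_of_real (h \<i>)) / 2"
  define R where "R = ladd (lsc a ([:0, 1:], 0)) (lsc b (1, 1))"
  have "complex_of_real (h z) = lp R z" if z: "cmod z = 1" for z
  proof -
    have z0: "z \<noteq> 0" using z by auto
    have "z = Re z *\<^sub>R 1 + Im z *\<^sub>R \<i>"
      by (simp add: complex_eq_iff)
    have lin: "linear h" using h by (rule bounded_linear.linear)
    have "h (Re z *\<^sub>R 1 + Im z *\<^sub>R \<i>) = Re z * h 1 + Im z * h \<i>"
      by (simp add: linear_add[OF lin] linear_scale[OF lin])
    then have hz: "h z = Re z * h 1 + Im z * h \<i>" using \<open>z = _\<close> by simp
    have "lp R z = a * z + b / z"
      by (simp only: R_def lp_ladd[OF z0] lp_lsc) simp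
    also have "\<dots> = a * z + b * cnj z" by (simp add: cnj_unit[OF z])
    also have "\<dots> = complex_of_real (h z)"
      by (simp add: hz complex_eq_iff a_def b_def field_simps)
    finally show ?thesis by simp
  qed
  then show ?thesis by blast
qed

lemma rpf_laurent:
  assumes "real_polynomial_function (h :: complex \<Rightarrow> real)"
  shows "\<exists>R. \<forall>z. cmod z = 1 \<longrightarrow> complex_of_real (h z) = lp R z"
  using assms
proof (induction h rule: real_polynomial_function.induct)
  case (linear f)
  then show ?case by (rule lin_laurent)
next
  case (const c)
  show ?case by (rule exI[of _ "([:complex_of_real c:], 0)"]) simp
next
  case (add f g)
  then obtain R S where R: "\<forall>z. cmod z = 1 \<longrightarrow> complex_of_real (f z) = lp R z"
    and S: "\<forall>z. cmod z = 1 \<longrightarrow> complex_of_real (g z) = lp S z" by blast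
  show ?case
    by (rule exI[of _ "ladd R S"]) (use R S in \<open>auto simp: lp_ladd1\<close>)
next
  case (mult f g)
  then obtain R S where R: "\<forall>z. cmod z = 1 \<longrightarrow> complex_of_real (f z) = lp R z"
    and S: "\<forall>z. cmod z = 1 \<longrightarrow> complex_of_real (g z) = lp S z" by blast
  show ?case
    by (rule exI[of _ "lmul R S"]) (use R S in \<open>auto simp: lp_lmul\<close>)
qed

lemma pf_laurent:
  assumes g: "polynomial_function (g :: complex \<Rightarrow> complex)"
  shows "\<exists>R. \<forall>z. cmod z = 1 \<longrightarrow> g z = lp R z"
proof -
  have "real_polynomial_function (Re \<circ> g)" "real_polynomial_function (Im \<circ> g)"
    using g bounded_linear_Re bounded_linear_Im unfolding polynomial_function_def by blast+
  then have "\<exists>R. \<forall>z. cmod z = 1 \<longrightarrow> complex_of_real (Re (g z)) = lp R z"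
    "\<exists>R. \<forall>z. cmod z = 1 \<longrightarrow> complex_of_real (Im (g z)) = lp R z"
    using rpf_laurent[of "Re \<circ> g"] rpf_laurent[of "Im \<circ> g"] by (simp_all add: o_def)
  then obtain R S where R: "\<forall>z. cmod z = 1 \<longrightarrow> complex_of_real (Re (g z)) = lp R z"
    and S: "\<forall>z. cmod z = 1 \<longrightarrow> complex_of_real (Im (g z)) = lp S z"
    by blast
  have "g z = lp (ladd R (lsc \<i> S)) z" if z: "cmod z = 1" for z
  proof -
    have "g z = complex_of_real (Re (g z)) + \<i> * complex_of_real (Im (g z))" by (rule complex_eq)
    also have "\<dots> = lp (ladd R (lsc \<i> S)) z" using R S z by (auto simp: lp_ladd1 lp_lsc)
    finally show ?thesis .
  qed
  then show ?thesis by blast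
qed

lemma laurent_dense:
  assumes f: "continuous_on (sphere 0 1) f" and e: "e > 0"
  shows "\<exists>R. \<forall>z\<in>sphere 0 1. cmod (f z - lp R z) < e"
proof -
  obtain g :: "complex \<Rightarrow> complex" where g: "polynomial_function g"
    and ge: "\<forall>x\<in>sphere 0 1. norm (f x - g x) < e"
    using Stone_Weierstrass_polynomial_function[OF compact_sphere f e] by blast
  obtain R where R: "\<forall>z. cmod z = 1 \<longrightarrow> g z = lp R z" using pf_laurent[OF g] by blast
  show ?thesis using ge R by (intro exI[of _ R]) auto
qed

definition apx :: "nat \<Rightarrow> lr set" where
  "apx n = {(P, D). D \<le> n \<and> degree P \<le> 2 * n}"

lemma apx_eventually: "\<exists>N. \<forall>n\<ge>N. R \<in> apx n"
  by (cases R) (rule exI[of _ "max (snd R) (degree (fst R))"], auto simp: apx_def)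

lemma lK_apx: "R \<in> apx n \<Longrightarrow> lK R \<le> 6 * (real n + 1)^2"
proof (cases R)
  case (Pair P D)
  assume "R \<in> apx n"
  then have d: "real D \<le> real n" "real (degree P) \<le> 2 * real n" by (auto simp: apx_def Pair)
  have "lK R = (real (degree P) + 1) * (real D + real (degree P))" by (simp add: Pair)
  also have "\<dots> \<le> (2 * real n + 1) * (3 * real n)"
    using d by (intro mult_mono) auto
  also have "\<dots> \<le> 6 * (real n + 1)^2" by (simp add: power2_eq_square algebra_simps)
  finally show ?thesis .
qed

definition dst :: "(complex \<Rightarrow> complex) \<Rightarrow> nat \<Rightarrow> real" where
  "dst f n = Inf {e. \<exists>R\<in>apx n. \<forall>z\<in>sphere 0 1. cmod (f z - lp R z) \<le> e}"

definition err :: "(complex \<Rightarrow> complex) \<Rightarrow> nat \<Rightarrow> real" where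
  "err f n = dst f n + 1 / (real n + 1)"

definition Ap :: "(complex \<Rightarrow> complex) \<Rightarrow> nat \<Rightarrow> lr" where
  "Ap f n = (SOME R. R \<in> apx n \<and> (\<forall>z\<in>sphere 0 1. cmod (f z - lp R z) \<le> err f n))"

lemma sphere_bounded_fun:
  fixes f :: "complex \<Rightarrow> complex"
  assumes f: "continuous_on (sphere 0 1) f"
  shows "\<exists>M\<ge>0. \<forall>z\<in>sphere 0 (1::real). cmod (f z) \<le> M"
proof -
  have "compact (f ` sphere 0 1)" by (rule compact_continuous_image[OF f compact_sphere])
  then obtain M where "\<forall>x\<in>f ` sphere 0 1. norm x \<le> M"
    by (meson bounded_iff compact_imp_bounded)
  then show ?thesis
    by (intro exI[of _ "max M 0"]) (auto intro: le_max_iff_disj[THEN iffD2])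
qed

lemma dst_set_props:
  fixes f :: "complex \<Rightarrow> complex"
  assumes f: "continuous_on (sphere 0 1) f"
  shows "{e. \<exists>R\<in>apx n. \<forall>z\<in>sphere 0 1. cmod (f z - lp R z) \<le> e} \<noteq> {}"
    and "bdd_below {e. \<exists>R\<in>apx n. \<forall>z\<in>sphere 0 1. cmod (f z - lp R z) \<le> e}"
    and "\<And>e. e \<in> {e. \<exists>R\<in>apx n. \<forall>z\<in>sphere 0 1. cmod (f z - lp R z) \<le> e} \<Longrightarrow> e \<ge> 0"
proof -
  obtain M where M: "\<forall>z\<in>sphere 0 (1::real). cmod (f z) \<le> M" using sphere_bounded_fun[OF f] by blast
  have "(0, 0) \<in> apx n" by (simp add: apx_def)
  then show "{e. \<exists>R\<in>apx n. \<forall>z\<in>sphere 0 1. cmod (f z - lp R z) \<le> e} \<noteq> {}"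
    using M by (intro ex_in_conv[THEN iffD1] exI[of _ M]) force
  show ge0: "e \<ge> 0" if "e \<in> {e. \<exists>R\<in>apx n. \<forall>z\<in>sphere 0 1. cmod (f z - lp R z) \<le> e}" for e
  proof -
    from that obtain R where "\<forall>z\<in>sphere 0 1. cmod (f z - lp R z) \<le> e" by blast
    then have "cmod (f 1 - lp R 1) \<le> e" by simp
    then show ?thesis by (meson norm_ge_zero order_trans)
  qed
  show "bdd_below {e. \<exists>R\<in>apx n. \<forall>z\<in>sphere 0 1. cmod (f z - lp R z) \<le> e}"
    using ge0 by (intro bdd_belowI[of _ 0]) blast
qed

lemma Ap_prop:
  assumes f: "continuous_on (sphere 0 1) f"
  shows "Ap f n \<in> apx n \<and> (\<forall>z\<in>sphere 0 1. cmod (f z - lp (Ap f n) z) \<le> err f n)"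
proof -
  let ?E = "{e. \<exists>R\<in>apx n. \<forall>z\<in>sphere 0 1. cmod (f z - lp R z) \<le> e}"
  have "Inf ?E < err f n" by (simp add: err_def dst_def)
  then obtain e where "e \<in> ?E" "e < err f n" using cInf_lessD[OF dst_set_props(1)[OF f]] by blast
  then have "\<exists>R. R \<in> apx n \<and> (\<forall>z\<in>sphere 0 1. cmod (f z - lp R z) \<le> err f n)"
    by (force intro: order_trans)
  then show ?thesis unfolding Ap_def by (rule someI_ex)
qed

lemma err_nonneg:
  assumes f: "continuous_on (sphere 0 1) f"
  shows "err f n \<ge> 0"
proof -
  have "dst f n \<ge> 0" unfolding dst_def
    by (rule cInf_greatest[OF dst_set_props(1)[OF f]]) (rule dst_set_props(3)[OF f])
  then show ?thesis by (simp add: err_def)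
qed

lemma err_lim:
  assumes f: "continuous_on (sphere 0 1) f"
  shows "err f \<longlonglongrightarrow> 0"
proof -
  have d0: "dst f n \<ge> 0" for n unfolding dst_def
    by (rule cInf_greatest[OF dst_set_props(1)[OF f]]) (rule dst_set_props(3)[OF f])
  have "dst f \<longlonglongrightarrow> 0"
  proof (rule LIMSEQ_I)
    fix r :: real assume r: "r > 0"
    obtain R where R: "\<forall>z\<in>sphere 0 1. cmod (f z - lp R z) < r / 2"
      using laurent_dense[OF f, of "r / 2"] r by auto
    obtain N where N: "\<forall>n\<ge>N. R \<in> apx n" using apx_eventually by blast
    have "norm (dst f n - 0) < r" if n: "n \<ge> N" for n
    proof -
      have "r / 2 \<in> {e. \<exists>R\<in>apx n. \<forall>z\<in>sphere 0 1. cmod (f z - lp R z) \<le> e}"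
        using N n R by (force intro: less_imp_le)
      then have "dst f n \<le> r / 2" unfolding dst_def by (rule cInf_lower) (rule dst_set_props(2)[OF f])
      then show ?thesis using d0[of n] r by simp
    qed
    then show "\<exists>no. \<forall>n\<ge>no. norm (dst f n - 0) < r" by blast
  qed
  moreover have "(\<lambda>n. 1 / (real n + 1)) \<longlonglongrightarrow> 0"
    using LIMSEQ_inverse_real_of_nat by (simp add: inverse_eq_divide add.commute)
  ultimately show ?thesis unfolding err_def[abs_def] using tendsto_add_zero by blast
qed


definition Mf :: "(complex \<Rightarrow> complex) \<Rightarrow> real" where
  "Mf f = (SOME M. M \<ge> 0 \<and> (\<forall>z\<in>sphere 0 1. cmod (f z) \<le> M))"

definition Ef :: "(complex \<Rightarrow> complex) \<Rightarrow> real" where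
  "Ef f = (SOME E. E \<ge> 0 \<and> (\<forall>n. err f n \<le> E))"

lemma Mf_prop: "continuous_on (sphere 0 1) f \<Longrightarrow> Mf f \<ge> 0 \<and> (\<forall>z\<in>sphere 0 1. cmod (f z) \<le> Mf f)"
  unfolding Mf_def by (rule someI_ex) (use sphere_bounded_fun in blast)

lemma Ef_prop:
  assumes f: "continuous_on (sphere 0 1) f"
  shows "Ef f \<ge> 0 \<and> (\<forall>n. err f n \<le> Ef f)"
proof -
  have "Bseq (err f)" using err_lim[OF f] by (rule convergent_imp_Bseq[OF convergentI])
  then obtain K where "K > 0" "\<forall>n. norm (err f n) \<le> K" by (rule BseqE)
  then have "\<forall>n. err f n \<le> K" by (simp add: abs_le_iff)
  then have "\<exists>E. E \<ge> 0 \<and> (\<forall>n. err f n \<le> E)" using \<open>K > 0\<close> by (intro exI[of _ K]) auto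
  then show ?thesis unfolding Ef_def by (rule someI_ex)
qed

lemma lp_Ap_bound:
  assumes f: "continuous_on (sphere 0 1) f" and z: "cmod z = 1"
  shows "cmod (lp (Ap f n) z) \<le> Mf f + err f n"
proof -
  have "cmod (f z - lp (Ap f n) z) \<le> err f n" using Ap_prop[OF f] z by simp
  moreover have "cmod (f z) \<le> Mf f" using Mf_prop[OF f] z by simp
  ultimately show ?thesis using norm_triangle_ineq4[of "f z" "f z - lp (Ap f n) z"] by simp
qed

lemma Ap_close: "continuous_on (sphere 0 1) f \<Longrightarrow> cmod z = 1 \<Longrightarrow> cmod (f z - lp (Ap f n) z) \<le> err f n"
  using Ap_prop by simp

lemma kappa_bound:
  assumes R: "R \<in> apx n" and b0: "0 \<le> b" and bC: "b \<le> C"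
  shows "lK R * b * (1 / (real n + 1)^3) \<le> 6 * C / (real n + 1)"
proof -
  have lK0: "lK R \<ge> 0" by (cases R) simp
  have "lK R * b \<le> (6 * (real n + 1)^2) * C"
    using lK_apx[OF R] b0 bC lK0 by (intro mult_mono) auto
  then have "lK R * b * (1 / (real n + 1)^3) \<le> (6 * (real n + 1)^2) * C * (1 / (real n + 1)^3)"
    by (intro mult_right_mono) auto
  also have "\<dots> = 6 * C / (real n + 1)"
  proof -
    define t where "t = real n + 1"
    have t0: "t > 0" by (simp add: t_def)
    have "(6 * t^2) * C * (1 / t^3) = 6 * C / t"
      using t0 by (simp add: power2_eq_square power3_eq_cube field_simps)
    then show ?thesis by (simp add: t_def)
  qed
  finally show ?thesis .
qed

lemma inv_lim: "(\<lambda>n. C / (real n + 1)) \<longlonglongrightarrow> 0"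
proof -
  have "(\<lambda>n. C * inverse (real (Suc n))) \<longlonglongrightarrow> C * 0"
    by (intro tendsto_intros LIMSEQ_inverse_real_of_nat)
  then show ?thesis by (simp add: divide_inverse add.commute)
qed

context cstar
begin

lemma ev_lip_gen:
  assumes "unitary w1" "unitary w2" "\<And>z. cmod z = 1 \<Longrightarrow> cmod (lp R z) \<le> B"
  shows "norm (ev w1 R - ev w2 R) \<le> lK R * B * norm (w1 - w2)"
  using ev_lip[of w1 w2 "fst R" "snd R" B] assms by simp

lemma ev_comm_gen:
  assumes "unitary w" "\<And>z. cmod z = 1 \<Longrightarrow> cmod (lp R z) \<le> B"
  shows "norm (comm (ev w R) a) \<le> lK R * B * norm (comm w a)"
  using ev_comm[of w "fst R" "snd R" B a] assms by simp

lemma ev_diff_bound: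
  assumes u: "unitary w" and h: "\<And>z. cmod z = 1 \<Longrightarrow> cmod (lp R z - lp S z) \<le> b"
  shows "norm (ev w R - ev w S) \<le> b"
proof -
  have "ev w R - ev w S = ev w (lsub R S)" by (simp add: ev_lsub[OF u])
  also have "norm \<dots> \<le> b"
  proof (rule ev_norm[OF u])
    fix z :: complex assume z: "cmod z = 1"
    then have "z \<noteq> 0" by auto
    then show "cmod (lp (lsub R S) z) \<le> b" using h[OF z] by (simp add: lp_lsub)
  qed
  finally show ?thesis .
qed

end

locale conv = cstar sc st for sc :: "complex \<Rightarrow> 'a::{real_normed_algebra_1,banach} \<Rightarrow> 'a" and st +
  fixes \<alpha> :: "complex \<Rightarrow> 'a \<Rightarrow> 'a" and v :: "nat \<Rightarrow> 'a" and dd :: "nat \<Rightarrow> 'a"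
  assumes ca: "circle_action sc st \<alpha>"
    and vu: "\<And>n. unitary (v n)"
    and va: "\<And>n \<zeta>. cmod \<zeta> = 1 \<Longrightarrow> norm (\<alpha> \<zeta> (v n) - sc (cnj \<zeta>) (v n)) \<le> 1 / (real n + 1)^3"
    and vc: "\<And>n j. j \<le> n \<Longrightarrow> norm (comm (v n) (dd j)) \<le> 1 / (real n + 1)^3"
    and dense: "\<And>a r. r > 0 \<Longrightarrow> \<exists>j. norm (a - dd j) < r"
begin

definition \<Phi> :: "(complex \<Rightarrow> complex) \<Rightarrow> nat \<Rightarrow> 'a" where
  "\<Phi> f n = ev (v n) (Ap f n)"

lemma saz: "cmod \<zeta> = 1 \<Longrightarrow> star_aut sc st (\<alpha> \<zeta>)"
  using ca by (simp add: circle_action_def)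

lemma Phi_norm: "continuous_on (sphere 0 1) f \<Longrightarrow> norm (\<Phi> f n) \<le> Mf f + Ef f"
proof -
  assume f: "continuous_on (sphere 0 1) f"
  have "norm (\<Phi> f n) \<le> Mf f + err f n"
    unfolding \<Phi>_def by (rule ev_norm[OF vu]) (rule lp_Ap_bound[OF f])
  then show ?thesis using Ef_prop[OF f] by (meson add_left_mono order_trans)
qed

lemma Phi_bounded: "continuous_on (sphere 0 1) f \<Longrightarrow> bounded_seq (\<Phi> f)"
  unfolding bounded_seq_def using Phi_norm by blast

lemma lK_Ap_bound:
  assumes f: "continuous_on (sphere 0 1) f"
  shows "lK (Ap f n) * (Mf f + err f n) * (1 / (real n + 1)^3) \<le> 6 * (Mf f + Ef f) / (real n + 1)"
proof (rule kappa_bound)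
  show "Ap f n \<in> apx n" using Ap_prop[OF f] by simp
  show "0 \<le> Mf f + err f n" using Mf_prop[OF f] err_nonneg[OF f] by simp
  show "Mf f + err f n \<le> Mf f + Ef f" using Ef_prop[OF f] by simp
qed

lemma Phi_rot:
  assumes f: "continuous_on (sphere 0 1) f" and z: "cmod \<zeta> = 1"
  shows "norm (\<alpha> \<zeta> (\<Phi> f n) - ev (v n) (lrot (cnj \<zeta>) (Ap f n))) \<le> 6 * (Mf f + Ef f) / (real n + 1)"
proof -
  have cz: "cmod (cnj \<zeta>) = 1" using z by simp
  have "\<alpha> \<zeta> (\<Phi> f n) - ev (v n) (lrot (cnj \<zeta>) (Ap f n)) = ev (\<alpha> \<zeta> (v n)) (Ap f n) - ev (sc (cnj \<zeta>) (v n)) (Ap f n)"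
    by (simp add: \<Phi>_def sa_ev[OF saz[OF z]] ev_lrot[OF cz])
  also have "norm \<dots> \<le> lK (Ap f n) * (Mf f + err f n) * norm (\<alpha> \<zeta> (v n) - sc (cnj \<zeta>) (v n))"
    by (rule ev_lip_gen) (simp_all add: sa_unitary[OF saz[OF z] vu] unitary_sc[OF cz vu] lp_Ap_bound[OF f])
  also have "\<dots> \<le> lK (Ap f n) * (Mf f + err f n) * (1 / (real n + 1)^3)"
  proof (rule mult_left_mono)
    show "norm (\<alpha> \<zeta> (v n) - sc (cnj \<zeta>) (v n)) \<le> 1 / (real n + 1)^3" by (rule va[OF z])
    have "lK (Ap f n) \<ge> 0" by (cases "Ap f n") simp
    then show "0 \<le> lK (Ap f n) * (Mf f + err f n)"
      using Mf_prop[OF f] err_nonneg[OF f] by simp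
  qed
  also have "\<dots> \<le> 6 * (Mf f + Ef f) / (real n + 1)" by (rule lK_Ap_bound[OF f])
  finally show ?thesis .
qed

end


lemma tri2: "cmod (x - a) \<le> e1 \<Longrightarrow> cmod (x - b) \<le> e2 \<Longrightarrow> cmod (a - b) \<le> e1 + e2"
  using norm_triangle_ineq4[of "x - b" "x - a"] by (simp add: norm_minus_commute)

context conv
begin

lemma C_eq:
  assumes f: "continuous_on (sphere 0 1) f" and g: "continuous_on (sphere 0 1) g"
    and fg: "\<forall>z\<in>sphere 0 1. f z = g z"
  shows "null_seq (\<lambda>n. \<Phi> f n - \<Phi> g n)"
proof (rule null_bound)
  show "norm (\<Phi> f n - \<Phi> g n) \<le> err f n + err g n" for n
    unfolding \<Phi>_def
  proof (rule ev_diff_bound[OF vu])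
    fix z :: complex assume z: "cmod z = 1"
    show "cmod (lp (Ap f n) z - lp (Ap g n) z) \<le> err f n + err g n"
      by (rule tri2[of "f z"]) (use Ap_close[OF f z] Ap_close[OF g z] fg z in auto)
  qed
  show "(\<lambda>n. err f n + err g n) \<longlonglongrightarrow> 0"
    using tendsto_add_zero[OF err_lim[OF f] err_lim[OF g]] .
qed

lemma C_add:
  assumes f: "continuous_on (sphere 0 1) f" and g: "continuous_on (sphere 0 1) g"
  shows "null_seq (\<lambda>n. \<Phi> (\<lambda>z. f z + g z) n - \<Phi> f n - \<Phi> g n)"
proof (rule null_bound)
  have fg: "continuous_on (sphere 0 1) (\<lambda>z. f z + g z)" using f g by (intro continuous_intros)
  show "norm (\<Phi> (\<lambda>z. f z + g z) n - \<Phi> f n - \<Phi> g n) \<le> err (\<lambda>z. f z + g z) n + (err f n + err g n)" for n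
  proof -
    have "\<Phi> (\<lambda>z. f z + g z) n - \<Phi> f n - \<Phi> g n = ev (v n) (Ap (\<lambda>z. f z + g z) n) - ev (v n) (ladd (Ap f n) (Ap g n))"
      by (simp add: \<Phi>_def ev_ladd[OF vu])
    also have "norm \<dots> \<le> err (\<lambda>z. f z + g z) n + (err f n + err g n)"
    proof (rule ev_diff_bound[OF vu])
      fix z :: complex assume z: "cmod z = 1"
      have e: "(f z + g z) - (lp (Ap f n) z + lp (Ap g n) z) = (f z - lp (Ap f n) z) + (g z - lp (Ap g n) z)"
        by simp
      have "cmod ((f z + g z) - (lp (Ap f n) z + lp (Ap g n) z)) \<le> err f n + err g n"
        unfolding e using norm_triangle_ineq[of "f z - lp (Ap f n) z" "g z - lp (Ap g n) z"]
          Ap_close[OF f z, of n] Ap_close[OF g z, of n] by linarith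
      then show "cmod (lp (Ap (\<lambda>z. f z + g z) n) z - lp (ladd (Ap f n) (Ap g n)) z) \<le> err (\<lambda>z. f z + g z) n + (err f n + err g n)"
        using tri2[OF Ap_close[OF fg z]] z by (simp add: lp_ladd1)
    qed
    finally show ?thesis .
  qed
  show "(\<lambda>n. err (\<lambda>z. f z + g z) n + (err f n + err g n)) \<longlonglongrightarrow> 0"
    using tendsto_add_zero[OF err_lim[OF fg] tendsto_add_zero[OF err_lim[OF f] err_lim[OF g]]] .
qed

lemma C_sc:
  assumes f: "continuous_on (sphere 0 1) f"
  shows "null_seq (\<lambda>n. \<Phi> (\<lambda>z. c * f z) n - sc c (\<Phi> f n))"
proof (rule null_bound)
  have cf: "continuous_on (sphere 0 1) (\<lambda>z. c * f z)" using f by (intro continuous_intros)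
  show "norm (\<Phi> (\<lambda>z. c * f z) n - sc c (\<Phi> f n)) \<le> err (\<lambda>z. c * f z) n + cmod c * err f n" for n
  proof -
    have "\<Phi> (\<lambda>z. c * f z) n - sc c (\<Phi> f n) = ev (v n) (Ap (\<lambda>z. c * f z) n) - ev (v n) (lsc c (Ap f n))"
      by (simp add: \<Phi>_def ev_lsc)
    also have "norm \<dots> \<le> err (\<lambda>z. c * f z) n + cmod c * err f n"
    proof (rule ev_diff_bound[OF vu])
      fix z :: complex assume z: "cmod z = 1"
      have "cmod (c * f z - c * lp (Ap f n) z) \<le> cmod c * err f n"
        using Ap_close[OF f z] by (simp add: right_diff_distrib[symmetric] norm_mult mult_left_mono)
      then show "cmod (lp (Ap (\<lambda>z. c * f z) n) z - lp (lsc c (Ap f n)) z) \<le> err (\<lambda>z. c * f z) n + cmod c * err f n"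
        using tri2[OF Ap_close[OF cf z]] by (simp add: lp_lsc)
    qed
    finally show ?thesis .
  qed
  show "(\<lambda>n. err (\<lambda>z. c * f z) n + cmod c * err f n) \<longlonglongrightarrow> 0"
    using tendsto_add_zero[OF err_lim[OF cf] tendsto_mult_right_zero[OF err_lim[OF f]]] .
qed

lemma C_mult:
  assumes f: "continuous_on (sphere 0 1) f" and g: "continuous_on (sphere 0 1) g"
  shows "null_seq (\<lambda>n. \<Phi> (\<lambda>z. f z * g z) n - \<Phi> f n * \<Phi> g n)"
proof (rule null_bound)
  have fg: "continuous_on (sphere 0 1) (\<lambda>z. f z * g z)" using f g by (intro continuous_intros)
  define b where "b n = err (\<lambda>z. f z * g z) n + (Mf f * err g n + err f n * (Mf g + Ef g))" for n
  show "norm (\<Phi> (\<lambda>z. f z * g z) n - \<Phi> f n * \<Phi> g n) \<le> b n" for n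
  proof -
    have "\<Phi> (\<lambda>z. f z * g z) n - \<Phi> f n * \<Phi> g n = ev (v n) (Ap (\<lambda>z. f z * g z) n) - ev (v n) (lmul (Ap f n) (Ap g n))"
      by (simp add: \<Phi>_def ev_lmul[OF vu])
    also have "norm \<dots> \<le> b n" unfolding b_def
    proof (rule ev_diff_bound[OF vu])
      fix z :: complex assume z: "cmod z = 1"
      let ?a = "lp (Ap f n) z" and ?b = "lp (Ap g n) z"
      have "f z * g z - ?a * ?b = f z * (g z - ?b) + (f z - ?a) * ?b" by (simp add: algebra_simps)
      then have "cmod (f z * g z - ?a * ?b) \<le> cmod (f z) * cmod (g z - ?b) + cmod (f z - ?a) * cmod ?b"
        by (metis norm_mult norm_triangle_ineq)
      also have "\<dots> \<le> Mf f * err g n + err f n * (Mf g + Ef g)"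
      proof (intro add_mono mult_mono)
        show "cmod (f z) \<le> Mf f" using Mf_prop[OF f] z by simp
        show "cmod (g z - ?b) \<le> err g n" by (rule Ap_close[OF g z])
        show "cmod (f z - ?a) \<le> err f n" by (rule Ap_close[OF f z])
        show "cmod ?b \<le> Mf g + Ef g" using lp_Ap_bound[OF g z, of n] Ef_prop[OF g] by (meson add_left_mono order_trans)
        show "0 \<le> Mf f" using Mf_prop[OF f] by simp
        show "0 \<le> err f n" by (rule err_nonneg[OF f])
      qed simp_all
      finally have "cmod (f z * g z - ?a * ?b) \<le> Mf f * err g n + err f n * (Mf g + Ef g)" .
      then show "cmod (lp (Ap (\<lambda>z. f z * g z) n) z - lp (lmul (Ap f n) (Ap g n)) z) \<le> err (\<lambda>z. f z * g z) n + (Mf f * err g n + err f n * (Mf g + Ef g))"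
        using tri2[OF Ap_close[OF fg z]] by (simp add: lp_lmul)
    qed
    finally show ?thesis .
  qed
  show "b \<longlonglongrightarrow> 0" unfolding b_def[abs_def]
    by (intro tendsto_add_zero err_lim fg tendsto_mult_right_zero tendsto_mult_left_zero f g)
qed

lemma C_star:
  assumes f: "continuous_on (sphere 0 1) f"
  shows "null_seq (\<lambda>n. \<Phi> (\<lambda>z. cnj (f z)) n - st (\<Phi> f n))"
proof (rule null_bound)
  have cf: "continuous_on (sphere 0 1) (\<lambda>z. cnj (f z))" using f by (intro continuous_intros)
  show "norm (\<Phi> (\<lambda>z. cnj (f z)) n - st (\<Phi> f n)) \<le> err (\<lambda>z. cnj (f z)) n + err f n" for n
  proof -
    have "\<Phi> (\<lambda>z. cnj (f z)) n - st (\<Phi> f n) = ev (v n) (Ap (\<lambda>z. cnj (f z)) n) - ev (v n) (lstar (Ap f n))"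
      by (simp add: \<Phi>_def ev_lstar[OF vu])
    also have "norm \<dots> \<le> err (\<lambda>z. cnj (f z)) n + err f n"
    proof (rule ev_diff_bound[OF vu])
      fix z :: complex assume z: "cmod z = 1"
      have "cmod (cnj (f z) - cnj (lp (Ap f n) z)) \<le> err f n"
        using Ap_close[OF f z] by (metis complex_cnj_diff complex_mod_cnj)
      then show "cmod (lp (Ap (\<lambda>z. cnj (f z)) n) z - lp (lstar (Ap f n)) z) \<le> err (\<lambda>z. cnj (f z)) n + err f n"
        using tri2[OF Ap_close[OF cf z]] by (simp add: lp_lstar[OF z])
    qed
    finally show ?thesis .
  qed
  show "(\<lambda>n. err (\<lambda>z. cnj (f z)) n + err f n) \<longlonglongrightarrow> 0"
    using tendsto_add_zero[OF err_lim[OF cf] err_lim[OF f]] .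
qed

lemma C_one: "null_seq (\<lambda>n. \<Phi> (\<lambda>z. 1) n - 1)"
proof (rule null_bound)
  have c1: "continuous_on (sphere 0 1) (\<lambda>z::complex. 1::complex)" by simp
  show "norm (\<Phi> (\<lambda>z. 1) n - 1) \<le> err (\<lambda>z. 1) n + 0" for n
  proof -
    have "\<Phi> (\<lambda>z. 1) n - 1 = ev (v n) (Ap (\<lambda>z. 1) n) - ev (v n) ([:1:], 0)"
      by (simp add: \<Phi>_def peval_const)
    also have "norm \<dots> \<le> err (\<lambda>z. 1) n + 0"
    proof (rule ev_diff_bound[OF vu])
      fix z :: complex assume z: "cmod z = 1"
      show "cmod (lp (Ap (\<lambda>z. 1) n) z - lp ([:1:], 0) z) \<le> err (\<lambda>z. 1) n + 0"
        using tri2[OF Ap_close[OF c1 z], of 1 0] by simp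
    qed
    finally show ?thesis .
  qed
  show "(\<lambda>n. err (\<lambda>z. 1) n + 0) \<longlonglongrightarrow> 0" using err_lim[of "\<lambda>z. 1"] by simp
qed

end


lemma norm3c: "cmod (A + B - C) \<le> cmod A + cmod B + cmod C"
  using norm_triangle_ineq4[of "A + B" C] norm_triangle_ineq[of A B] by linarith

context conv
begin

lemma K_nonneg: "continuous_on (sphere 0 1) f \<Longrightarrow> Mf f + Ef f \<ge> 0"
  using Mf_prop Ef_prop by (metis add_nonneg_nonneg)

lemma comm_bound_n:
  assumes f: "continuous_on (sphere 0 1) f" and j: "j \<le> n"
  shows "norm (comm (\<Phi> f n) (dd j)) \<le> 6 * (Mf f + Ef f) / (real n + 1)"
proof -
  have "norm (comm (\<Phi> f n) (dd j)) \<le> lK (Ap f n) * (Mf f + err f n) * norm (comm (v n) (dd j))"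
    unfolding \<Phi>_def by (rule ev_comm_gen[OF vu]) (rule lp_Ap_bound[OF f])
  also have "\<dots> \<le> lK (Ap f n) * (Mf f + err f n) * (1 / (real n + 1)^3)"
  proof (rule mult_left_mono)
    show "norm (comm (v n) (dd j)) \<le> 1 / (real n + 1)^3" by (rule vc[OF j])
    have "lK (Ap f n) \<ge> 0" by (cases "Ap f n") simp
    then show "0 \<le> lK (Ap f n) * (Mf f + err f n)"
      using Mf_prop[OF f] err_nonneg[OF f] by simp
  qed
  also have "\<dots> \<le> 6 * (Mf f + Ef f) / (real n + 1)" by (rule lK_Ap_bound[OF f])
  finally show ?thesis .
qed

lemma C_central:
  assumes f: "continuous_on (sphere 0 1) f"
  shows "null_seq (\<lambda>n. \<Phi> f n * a - a * \<Phi> f n)"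
  unfolding null_seq_def
proof (rule LIMSEQ_I)
  fix r :: real assume r: "r > 0"
  define K where "K = Mf f + Ef f"
  have K0: "K \<ge> 0" using K_nonneg[OF f] by (simp add: K_def)
  define \<rho> where "\<rho> = r / (4 * (K + 1))"
  have rho: "\<rho> > 0" using r K0 by (simp add: \<rho>_def)
  obtain j where j: "norm (a - dd j) < \<rho>"
    using dense[OF rho] by auto
  have "eventually (\<lambda>n. 6 * K / (real n + 1) < r / 2) sequentially"
    using order_tendstoD(2)[OF inv_lim[of "6 * K"], of "r / 2"] r by simp
  then obtain N1 where N1: "\<And>n. n \<ge> N1 \<Longrightarrow> 6 * K / (real n + 1) < r / 2"
    by (auto simp: eventually_sequentially)
  have "norm (\<Phi> f n * a - a * \<Phi> f n - 0) < r" if n: "n \<ge> max j N1" for n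
  proof -
    let ?x = "\<Phi> f n" and ?d = "dd j"
    have "?x * a - a * ?x = comm ?x ?d + (?x * (a - ?d) - (a - ?d) * ?x)"
      by (simp add: comm_def algebra_simps)
    then have t1: "norm (?x * a - a * ?x) \<le> norm (comm ?x ?d) + norm (?x * (a - ?d) - (a - ?d) * ?x)"
      by (simp only: norm_triangle_ineq)
    have t2: "norm (?x * (a - ?d) - (a - ?d) * ?x) \<le> norm (?x * (a - ?d)) + norm ((a - ?d) * ?x)"
      by (rule norm_triangle_ineq4)
    have t3: "norm (comm ?x ?d) \<le> 6 * K / (real n + 1)"
      using comm_bound_n[OF f, of j n] n by (simp add: K_def)
    have t4: "6 * K / (real n + 1) < r / 2" using N1 n by simp
    have xK: "norm ?x \<le> K" using Phi_norm[OF f] by (simp add: K_def)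
    have nd: "norm (a - ?d) \<le> \<rho>" using j by simp
    have t5: "norm (?x * (a - ?d)) \<le> K * \<rho>"
      by (rule order_trans[OF norm_mult_ineq]) (intro mult_mono xK nd; simp add: K0)
    have t6: "norm ((a - ?d) * ?x) \<le> K * \<rho>"
      by (rule order_trans[OF norm_mult_ineq]) (subst mult.commute, intro mult_mono xK nd; simp add: K0)
    have t7: "2 * K * \<rho> \<le> 2 * (K + 1) * \<rho>" using rho by (intro mult_right_mono) auto
    have t8: "2 * (K + 1) * \<rho> = r / 2" using K0 by (simp add: \<rho>_def field_simps)
    from t1 t2 t3 t4 t5 t6 t7 t8 show ?thesis by simp
  qed
  then show "\<exists>no. \<forall>n\<ge>no. norm (\<Phi> f n * a - a * \<Phi> f n - 0) < r" by blast
qed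

lemma Lt_cont:
  assumes f: "continuous_on (sphere 0 1) f" and z: "cmod \<zeta> = 1"
  shows "continuous_on (sphere 0 1) (\<lambda>z. f (cnj \<zeta> * z))"
  by (rule continuous_on_compose2[OF f]) (auto intro!: continuous_intros simp: norm_mult z)

lemma C_equiv:
  assumes f: "continuous_on (sphere 0 1) f" and z: "cmod \<zeta> = 1"
  shows "null_seq (\<lambda>n. \<alpha> \<zeta> (\<Phi> f n) - \<Phi> (\<lambda>z. f (cnj \<zeta> * z)) n)"
proof (rule null_bound)
  define K where "K = Mf f + Ef f"
  have Lf: "continuous_on (sphere 0 1) (\<lambda>z. f (cnj \<zeta> * z))" by (rule Lt_cont[OF f z])
  have cz: "cmod (cnj \<zeta>) = 1" using z by simp
  show "norm (\<alpha> \<zeta> (\<Phi> f n) - \<Phi> (\<lambda>z. f (cnj \<zeta> * z)) n) \<le> 6 * K / (real n + 1) + (err f n + err (\<lambda>z. f (cnj \<zeta> * z)) n)" for n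
  proof -
    let ?R = "ev (v n) (lrot (cnj \<zeta>) (Ap f n))"
    have "norm (\<alpha> \<zeta> (\<Phi> f n) - \<Phi> (\<lambda>z. f (cnj \<zeta> * z)) n) \<le> norm (\<alpha> \<zeta> (\<Phi> f n) - ?R) + norm (?R - \<Phi> (\<lambda>z. f (cnj \<zeta> * z)) n)"
    proof -
      have "\<alpha> \<zeta> (\<Phi> f n) - \<Phi> (\<lambda>z. f (cnj \<zeta> * z)) n = (\<alpha> \<zeta> (\<Phi> f n) - ?R) + (?R - \<Phi> (\<lambda>z. f (cnj \<zeta> * z)) n)"
        by simp
      then show ?thesis by (simp only: norm_triangle_ineq)
    qed
    also have "norm (\<alpha> \<zeta> (\<Phi> f n) - ?R) \<le> 6 * K / (real n + 1)"
      using Phi_rot[OF f z] by (simp add: K_def)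
    also have "norm (?R - \<Phi> (\<lambda>z. f (cnj \<zeta> * z)) n) \<le> err f n + err (\<lambda>z. f (cnj \<zeta> * z)) n"
      unfolding \<Phi>_def
    proof (rule ev_diff_bound[OF vu])
      fix w :: complex assume w: "cmod w = 1"
      have cw: "cmod (cnj \<zeta> * w) = 1" using z w by (simp add: norm_mult)
      show "cmod (lp (lrot (cnj \<zeta>) (Ap f n)) w - lp (Ap (\<lambda>z. f (cnj \<zeta> * z)) n) w) \<le> err f n + err (\<lambda>z. f (cnj \<zeta> * z)) n"
        using tri2[OF Ap_close[OF f cw, of n] Ap_close[OF Lf w, of n]] by (simp add: lp_lrot[OF cz])
    qed
    finally show ?thesis by simp
  qed
  show "(\<lambda>n. 6 * K / (real n + 1) + (err f n + err (\<lambda>z. f (cnj \<zeta> * z)) n)) \<longlonglongrightarrow> 0"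
    by (intro tendsto_add_zero inv_lim err_lim f Lf)
qed

lemma C_acont:
  assumes f: "continuous_on (sphere 0 1) f"
  shows "alpha_cont_seq \<alpha> (\<Phi> f)"
  unfolding alpha_cont_seq_def
proof (intro ballI allI impI)
  fix \<zeta>0 :: complex and e :: real assume z0: "\<zeta>0 \<in> sphere 0 1" and e: "e > 0"
  define K where "K = Mf f + Ef f"
  have uc: "uniformly_continuous_on (sphere 0 1) f"
    by (rule compact_uniformly_continuous[OF f compact_sphere])
  obtain d1 where d1: "d1 > 0" and d1h: "\<And>x y. x \<in> sphere 0 1 \<Longrightarrow> y \<in> sphere 0 1 \<Longrightarrow> dist y x < d1 \<Longrightarrow> dist (f y) (f x) < e / 2"
    using uc e unfolding uniformly_continuous_on_def by (metis half_gt_zero)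
  have lim: "(\<lambda>n. 6 * K / (real n + 1) + 6 * K / (real n + 1) + 2 * err f n) \<longlonglongrightarrow> 0"
    by (intro tendsto_add_zero inv_lim tendsto_mult_right_zero err_lim f)
  obtain N where N: "\<And>n. n \<ge> N \<Longrightarrow> 6 * K / (real n + 1) + 6 * K / (real n + 1) + 2 * err f n < e / 2"
    using order_tendstoD(2)[OF lim, of "e / 2"] e by (auto simp: eventually_sequentially)
  have "eventually (\<lambda>\<zeta>. \<forall>n\<in>{..<N}. dist (\<alpha> \<zeta> (\<Phi> f n)) (\<alpha> \<zeta>0 (\<Phi> f n)) < e) (at \<zeta>0 within sphere 0 1)"
  proof (rule eventually_ball_finite)
    show "\<forall>n\<in>{..<N}. eventually (\<lambda>\<zeta>. dist (\<alpha> \<zeta> (\<Phi> f n)) (\<alpha> \<zeta>0 (\<Phi> f n)) < e) (at \<zeta>0 within sphere 0 1)"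
    proof
      fix n
      have "continuous_on (sphere 0 1) (\<lambda>\<zeta>. \<alpha> \<zeta> (\<Phi> f n))" using ca by (simp add: circle_action_def)
      then have "((\<lambda>\<zeta>. \<alpha> \<zeta> (\<Phi> f n)) \<longlongrightarrow> \<alpha> \<zeta>0 (\<Phi> f n)) (at \<zeta>0 within sphere 0 1)"
        using z0 by (simp add: continuous_on_def)
      then show "eventually (\<lambda>\<zeta>. dist (\<alpha> \<zeta> (\<Phi> f n)) (\<alpha> \<zeta>0 (\<Phi> f n)) < e) (at \<zeta>0 within sphere 0 1)"
        using e by (rule tendstoD)
    qed
  qed simp
  then obtain d2 where d2: "d2 > 0" and d2h: "\<And>\<zeta>. \<zeta> \<in> sphere 0 1 \<Longrightarrow> \<zeta> \<noteq> \<zeta>0 \<Longrightarrow> dist \<zeta> \<zeta>0 < d2 \<Longrightarrow>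
      \<forall>n\<in>{..<N}. dist (\<alpha> \<zeta> (\<Phi> f n)) (\<alpha> \<zeta>0 (\<Phi> f n)) < e"
    unfolding eventually_at by blast
  show "\<exists>d>0. \<forall>\<zeta>\<in>sphere 0 1. cmod (\<zeta> - \<zeta>0) < d \<longrightarrow> (\<forall>n. norm (\<alpha> \<zeta> (\<Phi> f n) - \<alpha> \<zeta>0 (\<Phi> f n)) \<le> e)"
  proof (intro exI[of _ "min d1 d2"] conjI ballI impI allI)
    show "min d1 d2 > 0" using d1 d2 by simp
    fix \<zeta> n assume z: "\<zeta> \<in> sphere 0 1" and zd: "cmod (\<zeta> - \<zeta>0) < min d1 d2"
    show "norm (\<alpha> \<zeta> (\<Phi> f n) - \<alpha> \<zeta>0 (\<Phi> f n)) \<le> e"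
    proof (cases "\<zeta> = \<zeta>0")
      case True then show ?thesis using e by simp
    next
      case False
      show ?thesis
      proof (cases "n < N")
        case True
        then show ?thesis using d2h[OF z False] zd by (force simp: dist_norm)
      next
        case False
        then have nN: "n \<ge> N" by simp
        have zz: "cmod \<zeta> = 1" "cmod \<zeta>0 = 1" using z z0 by simp_all
        let ?A = "\<alpha> \<zeta> (\<Phi> f n)" and ?B = "\<alpha> \<zeta>0 (\<Phi> f n)"
        let ?R = "ev (v n) (lrot (cnj \<zeta>) (Ap f n))" and ?Rq = "ev (v n) (lrot (cnj \<zeta>0) (Ap f n))"
        have eqAB: "?A - ?B = (?A - ?R) + (?R - ?Rq) - (?B - ?Rq)" by simp
        have s1: "norm (?A - ?B) \<le> norm (?A - ?R) + norm (?R - ?Rq) + norm (?B - ?Rq)"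
          unfolding eqAB by (rule norm3)
        have s2: "norm (?A - ?R) \<le> 6 * K / (real n + 1)" using Phi_rot[OF f zz(1)] by (simp add: K_def)
        have s3: "norm (?B - ?Rq) \<le> 6 * K / (real n + 1)" using Phi_rot[OF f zz(2)] by (simp add: K_def)
        have s4: "norm (?R - ?Rq) \<le> 2 * err f n + e / 2"
        proof (rule ev_diff_bound[OF vu])
          fix w :: complex assume w: "cmod w = 1"
          have c1: "cmod (cnj \<zeta> * w) = 1" and c2: "cmod (cnj \<zeta>0 * w) = 1"
            using zz w by (simp_all add: norm_mult)
          have "dist (cnj \<zeta> * w) (cnj \<zeta>0 * w) = cmod (\<zeta> - \<zeta>0)"
          proof -
            have "cnj \<zeta> * w - cnj \<zeta>0 * w = cnj (\<zeta> - \<zeta>0) * w" by (simp add: algebra_simps)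
            moreover have "cmod (cnj (\<zeta> - \<zeta>0)) = cmod (\<zeta> - \<zeta>0)" by (rule complex_mod_cnj)
            ultimately show ?thesis by (simp only: dist_norm norm_mult w mult_1_right)
          qed
          then have "dist (f (cnj \<zeta> * w)) (f (cnj \<zeta>0 * w)) < e / 2"
            using d1h[of "cnj \<zeta>0 * w" "cnj \<zeta> * w"] c1 c2 zd by simp
          then have m: "cmod (f (cnj \<zeta> * w) - f (cnj \<zeta>0 * w)) \<le> e / 2" by (simp add: dist_norm)
          have a1: "cmod (f (cnj \<zeta> * w) - lp (Ap f n) (cnj \<zeta> * w)) \<le> err f n" by (rule Ap_close[OF f c1])
          have a2: "cmod (f (cnj \<zeta>0 * w) - lp (Ap f n) (cnj \<zeta>0 * w)) \<le> err f n" by (rule Ap_close[OF f c2])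
          have eqL: "lp (Ap f n) (cnj \<zeta> * w) - lp (Ap f n) (cnj \<zeta>0 * w) =
              (f (cnj \<zeta> * w) - f (cnj \<zeta>0 * w)) + (f (cnj \<zeta>0 * w) - lp (Ap f n) (cnj \<zeta>0 * w)) - (f (cnj \<zeta> * w) - lp (Ap f n) (cnj \<zeta> * w))"
            by simp
          have "cmod (lp (Ap f n) (cnj \<zeta> * w) - lp (Ap f n) (cnj \<zeta>0 * w)) \<le>
              cmod (f (cnj \<zeta> * w) - f (cnj \<zeta>0 * w)) + cmod (f (cnj \<zeta>0 * w) - lp (Ap f n) (cnj \<zeta>0 * w)) + cmod (f (cnj \<zeta> * w) - lp (Ap f n) (cnj \<zeta> * w))"
            unfolding eqL by (rule norm3c)
          then have "cmod (lp (Ap f n) (cnj \<zeta> * w) - lp (Ap f n) (cnj \<zeta>0 * w)) \<le> e / 2 + err f n + err f n"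
            using m a1 a2 by linarith
          then show "cmod (lp (lrot (cnj \<zeta>) (Ap f n)) w - lp (lrot (cnj \<zeta>0) (Ap f n)) w) \<le> 2 * err f n + e / 2"
            using zz by (simp add: lp_lrot)
        qed
        have s5: "6 * K / (real n + 1) + 6 * K / (real n + 1) + 2 * err f n < e / 2"
          using N[OF nN] by simp
        from s1 s2 s3 s4 s5 show ?thesis by simp
      qed
    qed
  qed
qed

lemma rokhlin: "rokhlin_circle sc st \<alpha>"
  unfolding rokhlin_circle_def Let_def
  by (intro exI[of _ \<Phi>] conjI ballI allI impI)
    (simp_all add: Phi_bounded C_acont C_eq C_add C_sc C_mult C_star C_one C_central C_equiv)

end


context cstar
begin

lemma converse:
  assumes ca: "circle_action sc st \<alpha>" and sep: "separable_space TYPE('a)"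
    and H: "\<forall>F::'a set. finite F \<longrightarrow> (\<forall>\<epsilon>>0. \<exists>u. unitary_el st u \<and>
        (\<forall>\<zeta>\<in>sphere 0 1. norm (\<alpha> \<zeta> u - sc \<zeta> u) < \<epsilon>) \<and>
        (\<forall>a\<in>F. norm (a * u - u * a) < \<epsilon>))"
  shows "rokhlin_circle sc st \<alpha>"
proof -
  obtain D :: "'a set" where cD: "countable D" and clD: "closure D = UNIV"
    using sep by (auto simp: separable_space_def)
  have Dne: "D \<noteq> {}" using clD by auto
  define dd where "dd = from_nat_into D"
  have rD: "range dd = D" unfolding dd_def using Dne cD by simp
  have dense: "\<exists>j. norm (a - dd j) < r" if r: "r > 0" for a :: 'a and r
  proof -
    have "a \<in> closure D" using clD by simp
    then obtain y where "y \<in> D" "dist y a < r" using r by (auto simp: closure_approachable)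
    then show ?thesis using rD by (auto simp: dist_norm norm_minus_commute)
  qed
  define \<delta> :: "nat \<Rightarrow> real" where "\<delta> n = 1 / (real n + 1)^3" for n
  have "\<forall>n. \<exists>u. unitary_el st u \<and> (\<forall>\<zeta>\<in>sphere 0 1. norm (\<alpha> \<zeta> u - sc \<zeta> u) < \<delta> n) \<and>
        (\<forall>a\<in>dd ` {..n}. norm (a * u - u * a) < \<delta> n)"
  proof
    fix n
    have "\<delta> n > 0" by (simp add: \<delta>_def)
    then show "\<exists>u. unitary_el st u \<and> (\<forall>\<zeta>\<in>sphere 0 1. norm (\<alpha> \<zeta> u - sc \<zeta> u) < \<delta> n) \<and>
        (\<forall>a\<in>dd ` {..n}. norm (a * u - u * a) < \<delta> n)"
      using H by blast
  qed
  then obtain u where u: "\<And>n. unitary_el st (u n)"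
    and ua: "\<And>n \<zeta>. \<zeta> \<in> sphere 0 1 \<Longrightarrow> norm (\<alpha> \<zeta> (u n) - sc \<zeta> (u n)) < \<delta> n"
    and uc: "\<And>n a. a \<in> dd ` {..n} \<Longrightarrow> norm (a * u n - u n * a) < \<delta> n"
    by metis
  have uu: "unitary (u n)" for n using u[of n] by (simp add: unitary_def unitary_el_def)
  interpret conv sc st \<alpha> "\<lambda>n. st (u n)" dd
  proof unfold_locales
    show "circle_action sc st \<alpha>" by (rule ca)
    show "unitary (st (u n))" for n by (rule unitary_st[OF uu])
    show "norm (\<alpha> \<zeta> (st (u n)) - sc (cnj \<zeta>) (st (u n))) \<le> 1 / (real n + 1)^3" if z: "cmod \<zeta> = 1" for n \<zeta>
    proof -
      have sa: "star_aut sc st (\<alpha> \<zeta>)" using ca z by (simp add: circle_action_def)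
      have "\<alpha> \<zeta> (st (u n)) - sc (cnj \<zeta>) (st (u n)) = st (\<alpha> \<zeta> (u n) - sc \<zeta> (u n))"
        by (simp add: sa_props(5)[OF sa] st_diff st_sc)
      then have "norm (\<alpha> \<zeta> (st (u n)) - sc (cnj \<zeta>) (st (u n))) = norm (\<alpha> \<zeta> (u n) - sc \<zeta> (u n))"
        by simp
      also have "\<dots> < \<delta> n" using ua[of \<zeta> n] z by simp
      finally show ?thesis by (simp add: \<delta>_def)
    qed
    show "norm (comm (st (u n)) (dd j)) \<le> 1 / (real n + 1)^3" if j: "j \<le> n" for n j
    proof -
      have "norm (comm (st (u n)) (dd j)) \<le> norm (comm (u n) (dd j))" by (rule comm_st[OF uu])
      also have "\<dots> = norm (dd j * u n - u n * dd j)"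
        by (simp add: comm_def norm_minus_commute)
      also have "\<dots> < \<delta> n" using uc[of "dd j" n] j by simp
      finally show ?thesis by (simp add: \<delta>_def)
    qed
    show "\<exists>j. norm (a - dd j) < r" if "r > 0" for a r by (rule dense[OF that])
  qed
  show ?thesis by (rule rokhlin)
qed

end

theorem proposition2p4:
  fixes sc :: "complex \<Rightarrow> 'a::{real_normed_algebra_1,banach} \<Rightarrow> 'a"
    and st :: "'a \<Rightarrow> 'a"
    and \<alpha> :: "complex \<Rightarrow> 'a \<Rightarrow> 'a"
  assumes "cstar_alg sc st"
    and "separable_space TYPE('a)"
    and "circle_action sc st \<alpha>"
  shows "rokhlin_circle sc st \<alpha> \<longleftrightarrow>
    (\<forall>F::'a set. finite F \<longrightarrow> (\<forall>\<epsilon>>0. \<exists>u. unitary_el st u \<and>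
        (\<forall>\<zeta>\<in>sphere 0 1. norm (\<alpha> \<zeta> u - sc \<zeta> u) < \<epsilon>) \<and>
        (\<forall>a\<in>F. norm (a * u - u * a) < \<epsilon>)))"
proof -
  interpret cstar sc st by unfold_locales (rule assms(1))
  show ?thesis
  proof
    assume R: "rokhlin_circle sc st \<alpha>"
    show "\<forall>F::'a set. finite F \<longrightarrow> (\<forall>\<epsilon>>0. \<exists>u. unitary_el st u \<and>
        (\<forall>\<zeta>\<in>sphere 0 1. norm (\<alpha> \<zeta> u - sc \<zeta> u) < \<epsilon>) \<and>
        (\<forall>a\<in>F. norm (a * u - u * a) < \<epsilon>))"
      using forward[OF assms(3) R] by blast
  next
    assume H: "\<forall>F::'a set. finite F \<longrightarrow> (\<forall>\<epsilon>>0. \<exists>u. unitary_el st u \<and>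
        (\<forall>\<zeta>\<in>sphere 0 1. norm (\<alpha> \<zeta> u - sc \<zeta> u) < \<epsilon>) \<and>
        (\<forall>a\<in>F. norm (a * u - u * a) < \<epsilon>))"
    show "rokhlin_circle sc st \<alpha>" by (rule converse[OF assms(3) assms(2) H])
  qed
qed


end
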